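(* Let $(\mathfrak J,B)$ be a nilpotent pseudo-euclidean Jordan algebra with $\mathfrak J\notin\mathcal E$, where $\mathcal E$ consists of $\{0\}$ and the one-dimensional Jordan algebra with zero product. Then $\mathfrak J$ is obtained (up to isomorphism) from finitely many elements $\mathfrak J_1,\dots,\mathfrak J_n$ of $\mathcal E$ by a finite sequence of orthogonal direct sums of pseudo-euclidean Jordan algebras and/or generalized double extensions by the one-dimensional Jordan algebra with zero product.
   Context: All algebras are finite-dimensional over a field $\mathbb K$ of characteristic zero. A Jordan algebra is a commutative algebra with $x(yx^2)=(xy)x^2$; $(\mathfrak J,B)$ is pseudo-euclidean if $B$ is a nondegenerate symmetric bilinear form with $B(xy,z)=B(x,yz)$. The orthogonal direct sum of pseudo-euclidean algebras is the product algebra with the direct sum of the forms. Associator $(x,y,z)=(xy)z-x(yz)$. Admissible pair of a Jordan algebra $\mathfrak J_1$: $(D,x_0)\in\mathrm{End}(\mathfrak J_1)\times\mathfrak J_1$ with, for all $x,y$: $D(x^2y)=x^2D(y)+2D(x)(xy)-2x(D(x)y)$; $D(x)D(y)-D(D(x)y)=\tfrac12(x_0,y,x)$; $D(x_0x)=x_0D(x)$; $xD(x^2)=x^2D(x)$; $D^2(x^2)=2(D(x))^2-2xD^2(x)+x_0x^2$; $D^3(x)=\tfrac32x_0D(x)-\tfrac12xD(x_0)$; $D^2(x_0)=x_0^2$. Generalized double extension of a pseudo-euclidean $(\mathfrak J_1,B_1)$ by the one-dimensional algebra with zero product via such a pair with $D$ $B_1$-symmetric and $k\in\mathbb K$: $\mathbb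 Ka\oplus\mathfrak J_1\oplus\mathbb Kb$ with product $b\star\cdot=\cdot\star b=0$, $a\star a=x_0+kb$, $x\star y=xy+B_1(Dx,y)b$, $a\star x=x\star a=D(x)+B_1(x_0,x)b$ ($x,y\in\mathfrak J_1$), and scalar product extending $B_1$ with $B(a,b)=1$, $B(a,a)=B(b,b)=0$, $a,b\perp\mathfrak J_1$. *)

theory Defs
  imports Main
begin

text \<open>A finite-dimensional algebra with a bilinear form over a field 'k, given in
coordinates with respect to a basis e_0,...,e_(n-1): e_i e_j = sum_k cst i j k e_k and
B(e_i,e_j) = gram i j.\<close>

record 'k alg =
  dim  :: nat
  cst  :: "nat \<Rightarrow> nat \<Rightarrow> nat \<Rightarrow> 'k"
  gram :: "nat \<Rightarrow> nat \<Rightarrow> 'k"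

definition carrier :: "('k::field_char_0) alg \<Rightarrow> (nat \<Rightarrow> 'k) set" where
  "carrier A = {x. \<forall>i\<ge>dim A. x i = 0}"

definition vadd :: "(nat \<Rightarrow> 'k::field_char_0) \<Rightarrow> (nat \<Rightarrow> 'k) \<Rightarrow> nat \<Rightarrow> 'k" where
  "vadd x y = (\<lambda>i. x i + y i)"

definition vsub :: "(nat \<Rightarrow> 'k::field_char_0) \<Rightarrow> (nat \<Rightarrow> 'k) \<Rightarrow> nat \<Rightarrow> 'k" where
  "vsub x y = (\<lambda>i. x i - y i)"

definition vsmul :: "'k::field_char_0 \<Rightarrow> (nat \<Rightarrow> 'k) \<Rightarrow> nat \<Rightarrow> 'k" where
  "vsmul a x = (\<lambda>i. a * x i)"

definition vzero :: "nat \<Rightarrow> 'k::field_char_0" where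
  "vzero = (\<lambda>i. 0)"

definition unitv :: "nat \<Rightarrow> nat \<Rightarrow> 'k::field_char_0" where
  "unitv i = (\<lambda>j. if j = i then 1 else 0)"

definition mul :: "('k::field_char_0) alg \<Rightarrow> (nat \<Rightarrow> 'k) \<Rightarrow> (nat \<Rightarrow> 'k) \<Rightarrow> nat \<Rightarrow> 'k" where
  "mul A x y = (\<lambda>k. if k < dim A
      then (\<Sum>i<dim A. \<Sum>j<dim A. x i * y j * cst A i j k) else 0)"

definition bil :: "('k::field_char_0) alg \<Rightarrow> (nat \<Rightarrow> 'k) \<Rightarrow> (nat \<Rightarrow> 'k) \<Rightarrow> 'k" where
  "bil A x y = (\<Sum>i<dim A. \<Sum>j<dim A. x i * y j * gram A i j)"

definition assoc :: "('k::field_char_0) alg \<Rightarrow> (nat \<Rightarrow> 'k) \<Rightarrow> (nat \<Rightarrow> 'k) \<Rightarrow> (nat \<Rightarrow> 'k) \<Rightarrow> nat \<Rightarrow> 'k" where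
  "assoc A x y z = vsub (mul A (mul A x y) z) (mul A x (mul A y z))"

definition jordan :: "('k::field_char_0) alg \<Rightarrow> bool" where
  "jordan A \<longleftrightarrow> (\<forall>x\<in>carrier A. \<forall>y\<in>carrier A.
      mul A x y = mul A y x \<and>
      mul A x (mul A y (mul A x x)) = mul A (mul A x y) (mul A x x))"

definition pe_jordan :: "('k::field_char_0) alg \<Rightarrow> bool" where
  "pe_jordan A \<longleftrightarrow> jordan A \<and>
     (\<forall>x\<in>carrier A. \<forall>y\<in>carrier A. bil A x y = bil A y x) \<and>
     (\<forall>x\<in>carrier A. (\<forall>y\<in>carrier A. bil A x y = 0) \<longrightarrow> x = vzero) \<and>
     (\<forall>x\<in>carrier A. \<forall>y\<in>carrier A. \<forall>z\<in>carrier A.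
        bil A (mul A x y) z = bil A x (mul A y z))"

text \<open>prodk A k x: x is a product of k elements of A (arbitrary bracketing).
The span of these is A^k; A is nilpotent iff A^m = 0 for some m >= 1.\<close>
inductive prodk :: "('k::field_char_0) alg \<Rightarrow> nat \<Rightarrow> (nat \<Rightarrow> 'k) \<Rightarrow> bool"
  for A where
  base: "x \<in> carrier A \<Longrightarrow> prodk A 1 x"
| step: "prodk A i x \<Longrightarrow> prodk A j y \<Longrightarrow> prodk A (i + j) (mul A x y)"

definition nilpotent_alg :: "('k::field_char_0) alg \<Rightarrow> bool" where
  "nilpotent_alg A \<longleftrightarrow> (\<exists>m\<ge>1. \<forall>x. prodk A m x \<longrightarrow> x = vzero)"

definition alg_iso :: "('k::field_char_0) alg \<Rightarrow> 'k alg \<Rightarrow> bool" where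
  "alg_iso A C \<longleftrightarrow> (\<exists>f. bij_betw f (carrier A) (carrier C) \<and>
     (\<forall>a. \<forall>x\<in>carrier A. f (vsmul a x) = vsmul a (f x)) \<and>
     (\<forall>x\<in>carrier A. \<forall>y\<in>carrier A.
        f (vadd x y) = vadd (f x) (f y) \<and>
        f (mul A x y) = mul C (f x) (f y) \<and>
        bil C (f x) (f y) = bil A x y))"

definition E_class :: "('k::field_char_0) alg set" where
  "E_class = {A. dim A = 0 \<or>
      (dim A = 1 \<and> cst A 0 0 0 = 0 \<and> gram A 0 0 \<noteq> 0)}"

definition osum :: "('k::field_char_0) alg \<Rightarrow> 'k alg \<Rightarrow> 'k alg" where
  "osum A C = (let n = dim A; m = dim C in
     \<lparr> dim = n + m,
       cst = (\<lambda>i j k. if i < n \<and> j < n \<and> k < n then cst A i j k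
               else if n \<le> i \<and> n \<le> j \<and> n \<le> k \<and> i < n + m \<and> j < n + m \<and> k < n + m
               then cst C (i - n) (j - n) (k - n) else 0),
       gram = (\<lambda>i j. if i < n \<and> j < n then gram A i j
               else if n \<le> i \<and> n \<le> j \<and> i < n + m \<and> j < n + m
               then gram C (i - n) (j - n) else 0) \<rparr>)"

text \<open>The endomorphism D of A given by its matrix: D e_j = sum_i d i j e_i.\<close>
definition Dmap :: "('k::field_char_0) alg \<Rightarrow> (nat \<Rightarrow> nat \<Rightarrow> 'k) \<Rightarrow> (nat \<Rightarrow> 'k) \<Rightarrow> nat \<Rightarrow> 'k" where
  "Dmap A d x = (\<lambda>i. if i < dim A then (\<Sum>j<dim A. d i j * x j) else 0)"

definition admissible :: "('k::field_char_0) alg \<Rightarrow> (nat \<Rightarrow> nat \<Rightarrow> 'k) \<Rightarrow> (nat \<Rightarrow> 'k) \<Rightarrow> bool" where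
  "admissible A d x0 \<longleftrightarrow> x0 \<in> carrier A \<and>
    (let D = Dmap A d; m = mul A; sq = (\<lambda>x. mul A x x) in
     (\<forall>x\<in>carrier A. \<forall>y\<in>carrier A.
        D (m (sq x) y) =
          vsub (vadd (m (sq x) (D y)) (vsmul 2 (m (D x) (m x y))))
               (vsmul 2 (m x (m (D x) y))) \<and>
        vsub (m (D x) (D y)) (D (m (D x) y)) = vsmul (1/2) (assoc A x0 y x) \<and>
        D (m x0 x) = m x0 (D x) \<and>
        m x (D (sq x)) = m (sq x) (D x) \<and>
        D (D (sq x)) =
          vadd (vsub (vsmul 2 (sq (D x))) (vsmul 2 (m x (D (D x))))) (m x0 (sq x)) \<and>
        D (D (D x)) = vsub (vsmul (3/2) (m x0 (D x))) (vsmul (1/2) (m x (D x0)))) \<and>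
     D (D x0) = sq x0)"

definition bil_symmetric_map :: "('k::field_char_0) alg \<Rightarrow> (nat \<Rightarrow> nat \<Rightarrow> 'k) \<Rightarrow> bool" where
  "bil_symmetric_map A d \<longleftrightarrow>
     (\<forall>x\<in>carrier A. \<forall>y\<in>carrier A. bil A (Dmap A d x) y = bil A x (Dmap A d y))"

text \<open>Generalized double extension of A by the one-dimensional zero algebra via (D,x0) and k.
Basis of the result: index 0 is a, index i+1 is e_i (i < n), index n+1 is b.\<close>
definition dext :: "('k::field_char_0) alg \<Rightarrow> (nat \<Rightarrow> nat \<Rightarrow> 'k) \<Rightarrow> (nat \<Rightarrow> 'k) \<Rightarrow> 'k \<Rightarrow> 'k alg" where
  "dext A d x0 \<kappa> = (let n = dim A; D = Dmap A d in
     \<lparr> dim = n + 2,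
       cst = (\<lambda>i j k.
         if n + 2 \<le> i \<or> n + 2 \<le> j \<or> n + 2 \<le> k then 0
         else if i = n + 1 \<or> j = n + 1 then 0
         else if i = 0 \<and> j = 0 then
           (if k = n + 1 then \<kappa> else if k = 0 then 0 else x0 (k - 1))
         else if i = 0 then
           (if k = n + 1 then bil A x0 (unitv (j - 1))
            else if k = 0 then 0 else D (unitv (j - 1)) (k - 1))
         else if j = 0 then
           (if k = n + 1 then bil A x0 (unitv (i - 1))
            else if k = 0 then 0 else D (unitv (i - 1)) (k - 1))
         else
           (if k = n + 1 then bil A (D (unitv (i - 1))) (unitv (j - 1))
            else if k = 0 then 0 else cst A (i - 1) (j - 1) (k - 1))),
       gram = (\<lambda>i j.
         if n + 2 \<le> i \<or> n + 2 \<le> j then 0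
         else if (i = 0 \<and> j = n + 1) \<or> (i = n + 1 \<and> j = 0) then 1
         else if i = 0 \<or> j = 0 \<or> i = n + 1 \<or> j = n + 1 then 0
         else gram A (i - 1) (j - 1)) \<rparr>)"

inductive_set gen_class :: "('k::field_char_0) alg set" where
  base: "A \<in> E_class \<Longrightarrow> A \<in> gen_class"
| osum: "A \<in> gen_class \<Longrightarrow> C \<in> gen_class \<Longrightarrow> osum A C \<in> gen_class"
| dext: "A \<in> gen_class \<Longrightarrow> admissible A d x0 \<Longrightarrow> bil_symmetric_map A d \<Longrightarrow>
         dext A d x0 \<kappa> \<in> gen_class"

end

theory Submission
  imports Defs "HOL-Library.Function_Algebras" "HOL.Vector_Spaces"
begin



lemma sum_fun_apply: "(sum f A) x = sum (\<lambda>a. f a x) A"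
  by (induct A rule: infinite_finite_induct) auto

lemma additive_sum_gen:
  fixes h :: "'a::comm_monoid_add \<Rightarrow> 'b::comm_monoid_add"
  assumes "\<And>x y. h (x + y) = h x + h y" "h 0 = 0"
  shows "h (sum f I) = (\<Sum>i\<in>I. h (f i))"
  by (induct I rule: infinite_finite_induct) (simp_all add: assms)

lemma if01_mult[simp]: "(if P then 1 else 0) * (x::'a::field) = (if P then x else 0)"
  "x * (if P then 1 else 0) = (if P then x else 0)"
  by auto

lemma if01_mult2[simp]: "(if P then if Q then 1 else 0 else 0) * (x::'a::field) = (if P then if Q then x else 0 else 0)"
  by auto

lemma vadd_eq[simp]: "vadd x y = x + y" by (simp add: vadd_def plus_fun_def)
lemma vsub_eq[simp]: "vsub x y = x - y" by (simp add: vsub_def fun_eq_iff)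
lemma vzero_eq[simp]: "vzero = 0" by (simp add: vzero_def fun_eq_iff)
lemma vsmul_apply[simp]: "vsmul a x i = a * x i" by (simp add: vsmul_def)

interpretation VS: vector_space "vsmul :: 'k::field_char_0 \<Rightarrow> (nat \<Rightarrow> 'k) \<Rightarrow> (nat \<Rightarrow> 'k)"
  by unfold_locales (auto simp: fun_eq_iff algebra_simps)

lemma vsmul_add: "vsmul a (x + y) = vsmul a x + vsmul a y"
  by (simp add: fun_eq_iff algebra_simps)
lemma vsmul_diff: "vsmul a (x - y) = vsmul a x - vsmul a y"
  by (simp add: fun_eq_iff algebra_simps)
lemma vsmul_add_left: "vsmul (a + b) x = vsmul a x + vsmul b x"
  by (simp add: fun_eq_iff algebra_simps)
lemma vsmul_vsmul[simp]: "vsmul a (vsmul b x) = vsmul (a * b) x"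
  by (simp add: fun_eq_iff algebra_simps)
lemma vsmul_one[simp]: "vsmul 1 x = x"
  by (simp add: fun_eq_iff)
lemma vsmul_zero[simp]: "vsmul a 0 = 0" "vsmul 0 x = 0"
  by (simp_all add: fun_eq_iff)
lemma vsmul_sum: "vsmul a (sum f I) = (\<Sum>i\<in>I. vsmul a (f i))"
  by (rule additive_sum_gen[where h="vsmul a"]) (simp_all add: vsmul_add)
lemma vsmul_minus: "vsmul (-a) x = - vsmul a x"
  by (simp add: fun_eq_iff)

lemma carrier_iff: "x \<in> carrier A \<longleftrightarrow> (\<forall>i\<ge>dim A. x i = 0)"
  by (simp add: carrier_def)

lemma carrier_add[intro,simp]: "x \<in> carrier A \<Longrightarrow> y \<in> carrier A \<Longrightarrow> x + y \<in> carrier A"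
  by (simp add: carrier_def)
lemma carrier_diff[intro,simp]: "x \<in> carrier A \<Longrightarrow> y \<in> carrier A \<Longrightarrow> x - y \<in> carrier A"
  by (simp add: carrier_def)
lemma carrier_uminus[intro,simp]: "x \<in> carrier A \<Longrightarrow> - x \<in> carrier A"
  by (simp add: carrier_def)
lemma carrier_smul[intro,simp]: "x \<in> carrier A \<Longrightarrow> vsmul a x \<in> carrier A"
  by (simp add: carrier_def)
lemma carrier_zero[intro,simp]: "0 \<in> carrier A"
  by (simp add: carrier_def)
lemma carrier_mul[intro,simp]: "mul A x y \<in> carrier A"
  by (simp add: carrier_def mul_def)
lemma carrier_unitv[intro,simp]: "i < dim A \<Longrightarrow> unitv i \<in> carrier A"
  by (simp add: carrier_def unitv_def)
lemma carrier_sum[intro]: "(\<And>i. i \<in> I \<Longrightarrow> f i \<in> carrier A) \<Longrightarrow> sum f I \<in> carrier A"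
  by (induct I rule: infinite_finite_induct) auto

lemma subspace_carrier: "VS.subspace (carrier A)"
  by (auto simp: VS.subspace_def)

lemma carrier_expand:
  assumes "x \<in> carrier A"
  shows "x = (\<Sum>i<dim A. vsmul (x i) (unitv i))"
proof
  fix k
  show "x k = (\<Sum>i<dim A. vsmul (x i) (unitv i)) k"
    using assms by (auto simp: sum_fun_apply unitv_def carrier_def)
qed

lemma mul_add_left: "mul A (x + y) z = mul A x z + mul A y z"
  by (auto simp: mul_def fun_eq_iff algebra_simps sum.distrib)
lemma mul_add_right: "mul A z (x + y) = mul A z x + mul A z y"
  by (auto simp: mul_def fun_eq_iff algebra_simps sum.distrib)
lemma mul_smul_left: "mul A (vsmul a x) y = vsmul a (mul A x y)"
  by (auto simp: mul_def fun_eq_iff sum_distrib_left algebra_simps)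
lemma mul_smul_right: "mul A y (vsmul a x) = vsmul a (mul A y x)"
  by (auto simp: mul_def fun_eq_iff sum_distrib_left algebra_simps)
lemma mul_zero[simp]: "mul A 0 y = 0" "mul A y 0 = 0"
  by (auto simp: mul_def fun_eq_iff)
lemma mul_diff_left: "mul A (x - y) z = mul A x z - mul A y z"
  by (auto simp: mul_def fun_eq_iff algebra_simps sum_subtractf)
lemma mul_diff_right: "mul A z (x - y) = mul A z x - mul A z y"
  by (auto simp: mul_def fun_eq_iff algebra_simps sum_subtractf)
lemma mul_uminus: "mul A (- x) z = - mul A x z" "mul A z (- x) = - mul A z x"
  using mul_diff_left[of A 0 x z] mul_diff_right[of A z 0 x] by auto
lemma mul_sum_left: "mul A (sum f I) y = (\<Sum>i\<in>I. mul A (f i) y)"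
  by (rule additive_sum_gen[where h="\<lambda>x. mul A x y"]) (simp_all add: mul_add_left)
lemma mul_sum_right: "mul A y (sum f I) = (\<Sum>i\<in>I. mul A y (f i))"
  by (rule additive_sum_gen[where h="\<lambda>x. mul A y x"]) (simp_all add: mul_add_right)

lemma bil_add_left: "bil A (x + y) z = bil A x z + bil A y z"
  by (auto simp: bil_def algebra_simps sum.distrib)
lemma bil_add_right: "bil A z (x + y) = bil A z x + bil A z y"
  by (auto simp: bil_def algebra_simps sum.distrib)
lemma bil_smul_left: "bil A (vsmul a x) y = a * bil A x y"
  by (auto simp: bil_def sum_distrib_left algebra_simps)
lemma bil_smul_right: "bil A y (vsmul a x) = a * bil A y x"
  by (auto simp: bil_def sum_distrib_left algebra_simps)
lemma bil_zero[simp]: "bil A 0 y = 0" "bil A y 0 = 0"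
  by (auto simp: bil_def)
lemma bil_diff_left: "bil A (x - y) z = bil A x z - bil A y z"
  by (auto simp: bil_def algebra_simps sum_subtractf)
lemma bil_diff_right: "bil A z (x - y) = bil A z x - bil A z y"
  by (auto simp: bil_def algebra_simps sum_subtractf)
lemma bil_sum_left: "bil A (sum f I) y = (\<Sum>i\<in>I. bil A (f i) y)"
  by (rule additive_sum_gen[where h="\<lambda>x. bil A x y"]) (simp_all add: bil_add_left)
lemma bil_sum_right: "bil A y (sum f I) = (\<Sum>i\<in>I. bil A y (f i))"
  by (rule additive_sum_gen[where h="\<lambda>x. bil A y x"]) (simp_all add: bil_add_right)

lemmas mul_lin = mul_add_left mul_add_right mul_smul_left mul_smul_right mul_diff_left mul_diff_right mul_uminus
lemmas bil_lin = bil_add_left bil_add_right bil_smul_left bil_smul_right bil_diff_left bil_diff_right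

lemma mul_unitv: "i < dim A \<Longrightarrow> j < dim A \<Longrightarrow> mul A (unitv i) (unitv j) = (\<lambda>k. if k < dim A then cst A i j k else 0)"
  by (auto simp: mul_def unitv_def fun_eq_iff)

lemma bil_unitv: "i < dim A \<Longrightarrow> j < dim A \<Longrightarrow> bil A (unitv i) (unitv j) = gram A i j"
  by (simp add: bil_def unitv_def)




definition lin_on :: "(nat \<Rightarrow> 'k::field_char_0) set \<Rightarrow> ((nat \<Rightarrow> 'k) \<Rightarrow> (nat \<Rightarrow> 'k)) \<Rightarrow> bool" where
  "lin_on S f \<longleftrightarrow> (\<forall>x\<in>S. \<forall>y\<in>S. f (x + y) = f x + f y) \<and> (\<forall>a. \<forall>x\<in>S. f (vsmul a x) = vsmul a (f x))"

definition hom_on :: "'k::field_char_0 alg \<Rightarrow> 'k alg \<Rightarrow> (nat \<Rightarrow> 'k) set \<Rightarrow> ((nat \<Rightarrow> 'k) \<Rightarrow> (nat \<Rightarrow> 'k))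
    \<Rightarrow> ((nat \<Rightarrow> 'k) \<Rightarrow> (nat \<Rightarrow> 'k)) \<Rightarrow> bool" where
  "hom_on A J W P g \<longleftrightarrow> bij_betw g (carrier A) W \<and> lin_on (carrier A) g \<and>
     (\<forall>x\<in>carrier A. \<forall>y\<in>carrier A. g (mul A x y) = P (mul J (g x) (g y)) \<and> bil J (g x) (g y) = bil A x y)"

lemma alg_iso_hom: "alg_iso A C \<longleftrightarrow> (\<exists>f. hom_on A C (carrier C) id f)"
  unfolding alg_iso_def hom_on_def lin_on_def by auto

lemma lin_on_0:
  assumes "lin_on S f" "VS.subspace S" shows "f 0 = 0"
proof -
  have "0 \<in> S" using assms(2) by (simp add: VS.subspace_0)
  then have "f (vsmul 0 0) = vsmul 0 (f 0)" using assms(1) unfolding lin_on_def by blast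
  then show ?thesis by simp
qed

lemma lin_on_sum:
  assumes "lin_on S f" "VS.subspace S" "\<And>i. i \<in> I \<Longrightarrow> w i \<in> S"
  shows "f (sum w I) = (\<Sum>i\<in>I. f (w i))"
  using assms(3)
proof (induct I rule: infinite_finite_induct)
  case (infinite A)
  have "f (sum w A) = f 0" using infinite.hyps by (metis sum.infinite)
  also have "\<dots> = 0" using lin_on_0[OF assms(1,2)] .
  also have "\<dots> = (\<Sum>i\<in>A. f (w i))" using infinite.hyps by (metis sum.infinite)
  finally show ?case .
next
  case empty
  have "f (sum w {}) = f 0" by (metis sum.empty)
  also have "\<dots> = 0" using lin_on_0[OF assms(1,2)] .
  also have "\<dots> = (\<Sum>i\<in>{}. f (w i))" by (metis sum.empty)
  finally show ?case .
next
  case (insert x F)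
  have "sum w F \<in> S" using insert.prems by (intro VS.subspace_sum[OF assms(2)]) auto
  moreover have "w x \<in> S" using insert.prems by auto
  ultimately have e: "f (w x + sum w F) = f (w x) + f (sum w F)"
    using assms(1) unfolding lin_on_def by blast
  have IH: "f (sum w F) = (\<Sum>i\<in>F. f (w i))" using insert by auto
  have "f (sum w (insert x F)) = f (w x + sum w F)" using insert.hyps by (metis sum.insert)
  also have "\<dots> = f (w x) + (\<Sum>i\<in>F. f (w i))" by (simp only: e IH)
  also have "\<dots> = (\<Sum>i\<in>insert x F. f (w i))" using insert.hyps by (metis sum.insert)
  finally show ?case .
qed

lemma lin_on_smul: "lin_on S f \<Longrightarrow> x \<in> S \<Longrightarrow> f (vsmul a x) = vsmul a (f x)"
  unfolding lin_on_def by blast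
lemma lin_on_add: "lin_on S f \<Longrightarrow> x \<in> S \<Longrightarrow> y \<in> S \<Longrightarrow> f (x + y) = f x + f y"
  unfolding lin_on_def by blast

lemma lin_on_diff:
  assumes "lin_on S f" "VS.subspace S" "x \<in> S" "y \<in> S"
  shows "f (x - y) = f x - f y"
proof -
  have m: "vsmul (-1) y \<in> S" using assms VS.subspace_scale by blast
  have "x - y = x + vsmul (-1) y" by (simp add: fun_eq_iff)
  then have "f (x - y) = f x + f (vsmul (-1) y)" using lin_on_add[OF assms(1,3) m] by simp
  also have "\<dots> = f x - f y" using lin_on_smul[OF assms(1,4), of "-1"] by (simp add: vsmul_minus)
  finally show ?thesis .
qed

lemma mul_expand:
  "mul M (\<Sum>i\<in>I. vsmul (c i) (u i)) (\<Sum>j\<in>K. vsmul (d j) (v j)) =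
   (\<Sum>i\<in>I. \<Sum>j\<in>K. vsmul (c i * d j) (mul M (u i) (v j)))"
proof -
  have "mul M (\<Sum>i\<in>I. vsmul (c i) (u i)) (\<Sum>j\<in>K. vsmul (d j) (v j)) =
     (\<Sum>i\<in>I. vsmul (c i) (mul M (u i) (\<Sum>j\<in>K. vsmul (d j) (v j))))"
    by (simp only: mul_sum_left mul_smul_left)
  also have "\<dots> = (\<Sum>i\<in>I. \<Sum>j\<in>K. vsmul (c i * d j) (mul M (u i) (v j)))"
    by (simp only: mul_sum_right mul_smul_right vsmul_sum vsmul_vsmul)
  finally show ?thesis .
qed

lemma bil_expand:
  "bil M (\<Sum>i\<in>I. vsmul (c i) (u i)) (\<Sum>j\<in>K. vsmul (d j) (v j)) =
   (\<Sum>i\<in>I. \<Sum>j\<in>K. (c i * d j) * (bil M (u i) (v j)))"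
proof -
  have "bil M (\<Sum>i\<in>I. vsmul (c i) (u i)) (\<Sum>j\<in>K. vsmul (d j) (v j)) =
     (\<Sum>i\<in>I. c i * (bil M (u i) (\<Sum>j\<in>K. vsmul (d j) (v j))))"
    by (simp only: bil_sum_left bil_smul_left)
  also have "\<dots> = (\<Sum>i\<in>I. \<Sum>j\<in>K. (c i * d j) * bil M (u i) (v j))"
    by (simp only: bil_sum_right bil_smul_right sum_distrib_left mult.assoc)
  finally show ?thesis .
qed

lemma lin_on_expand:
  assumes "lin_on (carrier A) g" "x \<in> carrier A"
  shows "g x = (\<Sum>i<dim A. vsmul (x i) (g (unitv i)))"
proof -
  have "g x = g (\<Sum>i<dim A. vsmul (x i) (unitv i))" by (rule arg_cong[where f=g, OF carrier_expand[OF assms(2)]])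
  also have "\<dots> = (\<Sum>i<dim A. g (vsmul (x i) (unitv i)))"
    by (rule lin_on_sum[OF assms(1) subspace_carrier]) auto
  also have "\<dots> = (\<Sum>i<dim A. vsmul (x i) (g (unitv i)))"
    by (rule sum.cong) (auto intro: lin_on_smul[OF assms(1)])
  finally show ?thesis .
qed

lemma hom_from_basis:
  assumes bij: "bij_betw g (carrier A) W" and lin: "lin_on (carrier A) g"
    and P: "lin_on (carrier J) P"
    and m: "\<And>i j. i < dim A \<Longrightarrow> j < dim A \<Longrightarrow> g (mul A (unitv i) (unitv j)) = P (mul J (g (unitv i)) (g (unitv j)))"
    and b: "\<And>i j. i < dim A \<Longrightarrow> j < dim A \<Longrightarrow> bil J (g (unitv i)) (g (unitv j)) = gram A i j"
  shows "hom_on A J W P g"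
  unfolding hom_on_def
proof (intro conjI ballI bij lin)
  fix x y assume x: "x \<in> carrier A" and y: "y \<in> carrier A"
  let ?n = "dim A"
  have ex: "mul A x y = (\<Sum>i<?n. \<Sum>j<?n. vsmul (x i * y j) (mul A (unitv i) (unitv j)))"
    unfolding arg_cong2[OF carrier_expand[OF x] carrier_expand[OF y], of "mul A"] by (rule mul_expand)
  have "g (mul A x y) = (\<Sum>i<?n. g (\<Sum>j<?n. vsmul (x i * y j) (mul A (unitv i) (unitv j))))"
    unfolding ex by (rule lin_on_sum[OF lin subspace_carrier]) auto
  also have "\<dots> = (\<Sum>i<?n. \<Sum>j<?n. g (vsmul (x i * y j) (mul A (unitv i) (unitv j))))"
    by (rule sum.cong[OF refl], rule lin_on_sum[OF lin subspace_carrier]) auto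
  also have "\<dots> = (\<Sum>i<?n. \<Sum>j<?n. vsmul (x i * y j) (P (mul J (g (unitv i)) (g (unitv j)))))"
    by (intro sum.cong refl) (simp add: lin_on_smul[OF lin] m)
  also have "\<dots> = (\<Sum>i<?n. P (\<Sum>j<?n. vsmul (x i * y j) (mul J (g (unitv i)) (g (unitv j)))))"
    by (rule sum.cong[OF refl], subst lin_on_sum[OF P subspace_carrier]) (auto simp: lin_on_smul[OF P])
  also have "\<dots> = P (\<Sum>i<?n. \<Sum>j<?n. vsmul (x i * y j) (mul J (g (unitv i)) (g (unitv j))))"
    by (subst lin_on_sum[OF P subspace_carrier]) (auto intro!: carrier_sum)
  also have "\<dots> = P (mul J (g x) (g y))"
    unfolding arg_cong2[OF lin_on_expand[OF lin x] lin_on_expand[OF lin y], of "mul J"] mul_expand ..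
  finally show "g (mul A x y) = P (mul J (g x) (g y))" .
  have "bil J (g x) (g y) = (\<Sum>i<?n. \<Sum>j<?n. (x i * y j) * bil J (g (unitv i)) (g (unitv j)))"
    unfolding arg_cong2[OF lin_on_expand[OF lin x] lin_on_expand[OF lin y], of "bil J"] by (rule bil_expand)
  also have "\<dots> = (\<Sum>i<?n. \<Sum>j<?n. (x i * y j) * bil A (unitv i) (unitv j))"
    by (intro sum.cong refl) (simp add: b bil_unitv)
  also have "\<dots> = bil A x y"
    unfolding arg_cong2[OF carrier_expand[OF x] carrier_expand[OF y], of "bil A"] bil_expand ..
  finally show "bil J (g x) (g y) = bil A x y" .
qed

lemma hom_onD:
  assumes "hom_on A J W P g"
  shows "bij_betw g (carrier A) W" "lin_on (carrier A) g"
    "x \<in> carrier A \<Longrightarrow> y \<in> carrier A \<Longrightarrow> g (mul A x y) = P (mul J (g x) (g y))"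
    "x \<in> carrier A \<Longrightarrow> y \<in> carrier A \<Longrightarrow> bil J (g x) (g y) = bil A x y"
  using assms by (simp_all add: hom_on_def)

lemma hom_comp:
  assumes f: "hom_on A J1 (carrier J1) id f" and g: "hom_on J1 J W P g"
  shows "hom_on A J W P (g \<circ> f)"
proof -
  have fb: "bij_betw f (carrier A) (carrier J1)" and gb: "bij_betw g (carrier J1) W"
    and fl: "lin_on (carrier A) f" and gl: "lin_on (carrier J1) g"
    and fm: "\<And>x y. x \<in> carrier A \<Longrightarrow> y \<in> carrier A \<Longrightarrow> f (mul A x y) = mul J1 (f x) (f y)"
    and fB: "\<And>x y. x \<in> carrier A \<Longrightarrow> y \<in> carrier A \<Longrightarrow> bil J1 (f x) (f y) = bil A x y"
    and gm: "\<And>x y. x \<in> carrier J1 \<Longrightarrow> y \<in> carrier J1 \<Longrightarrow> g (mul J1 x y) = P (mul J (g x) (g y))"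
    and gB: "\<And>x y. x \<in> carrier J1 \<Longrightarrow> y \<in> carrier J1 \<Longrightarrow> bil J (g x) (g y) = bil J1 x y"
    using hom_onD[OF f] hom_onD[OF g] by simp_all
  have fi: "x \<in> carrier A \<Longrightarrow> f x \<in> carrier J1" for x by (rule bij_betw_apply[OF fb])
  show ?thesis unfolding hom_on_def
  proof (intro conjI ballI)
    show "bij_betw (g \<circ> f) (carrier A) W" using bij_betw_trans[OF fb gb] .
    show "lin_on (carrier A) (g \<circ> f)" unfolding lin_on_def
    proof (intro conjI ballI allI)
      fix x y assume x: "x \<in> carrier A" and y: "y \<in> carrier A"
      show "(g \<circ> f) (x + y) = (g \<circ> f) x + (g \<circ> f) y"
        using lin_on_add[OF fl x y] lin_on_add[OF gl fi[OF x] fi[OF y]] by simp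
    next
      fix a x assume x: "x \<in> carrier A"
      show "(g \<circ> f) (vsmul a x) = vsmul a ((g \<circ> f) x)"
        using lin_on_smul[OF fl x] lin_on_smul[OF gl fi[OF x]] by simp
    qed
    fix x y assume x: "x \<in> carrier A" and y: "y \<in> carrier A"
    show "(g \<circ> f) (mul A x y) = P (mul J ((g \<circ> f) x) ((g \<circ> f) y))"
      using fm[OF x y] gm[OF fi[OF x] fi[OF y]] by simp
    show "bil J ((g \<circ> f) x) ((g \<circ> f) y) = bil A x y"
      using fB[OF x y] gB[OF fi[OF x] fi[OF y]] by simp
  qed
qed

lemma alg_iso_refl: "alg_iso A A"
  unfolding alg_iso_def by (rule exI[of _ id]) auto

lemma alg_iso_sym:
  assumes "alg_iso A C" shows "alg_iso C A"
proof -
  obtain f where fb: "bij_betw f (carrier A) (carrier C)"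
    and sm: "\<forall>a. \<forall>x\<in>carrier A. f (vsmul a x) = vsmul a (f x)"
    and ot: "\<forall>x\<in>carrier A. \<forall>y\<in>carrier A. f (vadd x y) = vadd (f x) (f y) \<and>
        f (mul A x y) = mul C (f x) (f y) \<and> bil C (f x) (f y) = bil A x y"
    using assms unfolding alg_iso_def by blast
  define h where "h = inv_into (carrier A) f"
  have hb: "bij_betw h (carrier C) (carrier A)" unfolding h_def by (rule bij_betw_inv_into[OF fb])
  have hi: "x \<in> carrier C \<Longrightarrow> h x \<in> carrier A" for x by (rule bij_betw_apply[OF hb])
  have fh: "x \<in> carrier C \<Longrightarrow> f (h x) = x" for x unfolding h_def
    using fb by (simp add: bij_betw_def f_inv_into_f)
  have hf: "x \<in> carrier A \<Longrightarrow> h (f x) = x" for x unfolding h_def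
    using fb by (simp add: bij_betw_def inv_into_f_f)
  show ?thesis unfolding alg_iso_def
  proof (intro exI[of _ h] conjI ballI allI hb)
    fix a x assume x: "x \<in> carrier C"
    have "f (vsmul a (h x)) = vsmul a x" using sm hi[OF x] fh[OF x] by auto
    then show "h (vsmul a x) = vsmul a (h x)" using hf[of "vsmul a (h x)"] hi[OF x] by auto
  next
    fix x y assume x: "x \<in> carrier C" and y: "y \<in> carrier C"
    have "f (vadd (h x) (h y)) = vadd x y" using ot hi x y fh by auto
    then show "h (vadd x y) = vadd (h x) (h y)" using hf[of "vadd (h x) (h y)"] hi x y by auto
    have "f (mul A (h x) (h y)) = mul C x y" using ot hi x y fh by auto
    then show "h (mul C x y) = mul A (h x) (h y)" using hf[of "mul A (h x) (h y)"] by auto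
    show "bil A (h x) (h y) = bil C x y" using ot hi x y fh by metis
  qed
qed




definition lc :: "nat \<Rightarrow> (nat \<Rightarrow> nat \<Rightarrow> 'k::field_char_0) \<Rightarrow> (nat \<Rightarrow> 'k) \<Rightarrow> (nat \<Rightarrow> 'k)" where
  "lc m w c = (\<Sum>i<m. vsmul (c i) (w i))"

lemma vsmul_if01[simp]: "vsmul (if P then 1 else 0) x = (if P then x else 0)"
  by simp

lemma carrier_span_unitv: "carrier A \<subseteq> VS.span (unitv ` {..<dim A})"
proof
  fix x assume x: "x \<in> carrier A"
  have h: "(\<Sum>i<dim A. vsmul (x i) (unitv i)) \<in> VS.span (unitv ` {..<dim A})"
    by (intro VS.span_sum VS.span_scale VS.span_base) auto
  show "x \<in> VS.span (unitv ` {..<dim A})" by (subst carrier_expand[OF x]) (rule h)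
qed

lemma construct:
  fixes J :: "'k::field_char_0 alg"
  assumes W: "VS.subspace W" "W \<subseteq> carrier J"
    and P: "lin_on (carrier J) P" and PW: "\<And>x y. x \<in> W \<Longrightarrow> y \<in> W \<Longrightarrow> P (mul J x y) \<in> W"
    and u: "u \<in> carrier J" "u \<notin> W"
  shows "\<exists>J1 g. hom_on J1 J W P g \<and> dim J1 < dim J"
proof -
  obtain B where B: "B \<subseteq> W" "VS.independent B" "W \<subseteq> VS.span B" "card B = VS.dim W"
    by (rule VS.basis_exists)
  have spB: "VS.span B \<subseteq> W" using VS.span_minimal[OF B(1) W(1)] .
  have uB: "u \<notin> VS.span B" using spB u by blast
  have ind: "VS.independent (insert u B)" using VS.independent_insertI[OF uB B(2)] .
  have sub: "insert u B \<subseteq> VS.span (unitv ` {..<dim J})" using B(1) W(2) u(1) carrier_span_unitv by blast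
  have bnd: "finite (insert u B) \<and> card (insert u B) \<le> card (unitv ` {..<dim J} :: (nat \<Rightarrow> 'k) set)"
    by (rule VS.independent_span_bound[OF finite_imageI[OF finite_lessThan] ind sub])
  have fB: "finite B" using bnd by simp
  have "card (unitv ` {..<dim J} :: (nat \<Rightarrow> 'k) set) \<le> dim J" using card_image_le[of "{..<dim J}" unitv] by simp
  moreover have "u \<notin> B" using B(1) u(2) by blast
  ultimately have cB: "card B < dim J" using bnd fB by simp
  define m where "m = card B"
  obtain w where w: "bij_betw w {..<m} B"
    using ex_bij_betw_nat_finite[OF fB] unfolding m_def atLeast0LessThan by blast
  have wW: "i < m \<Longrightarrow> w i \<in> W" for i using w B(1) bij_betw_apply by fastforce
  define Cm :: "(nat \<Rightarrow> 'k) set" where "Cm = {c. \<forall>i\<ge>m. c i = 0}"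
  define g where "g = lc m w"
  have gW: "g c \<in> W" for c unfolding g_def lc_def
    by (intro VS.subspace_sum[OF W(1)] VS.subspace_scale[OF W(1)]) (auto intro: wW)
  have glin_add: "g (x + y) = g x + g y" for x y
    unfolding g_def lc_def by (simp add: vsmul_add_left sum.distrib)
  have glin_sm: "g (vsmul a x) = vsmul a (g x)" for a x
    unfolding g_def lc_def by (simp add: vsmul_sum)
  have gdiff: "g (x - y) = g x - g y" for x y
  proof -
    have "x = (x - y) + y" by simp
    then have "g x = g (x - y) + g y" using glin_add by metis
    then show ?thesis by simp
  qed
  have g0: "c \<in> Cm \<Longrightarrow> g c = 0 \<Longrightarrow> c = 0" for c
  proof -
    assume c: "c \<in> Cm" and gc: "g c = 0"
    define U where "U v = c (inv_into {..<m} w v)" for v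
    have "(\<Sum>v\<in>B. vsmul (U v) v) = (\<Sum>i<m. vsmul (U (w i)) (w i))"
      using sum.reindex_bij_betw[OF w, of "\<lambda>v. vsmul (U v) v"] by simp
    also have "\<dots> = g c" unfolding g_def lc_def U_def
      by (intro sum.cong refl) (metis bij_betw_imp_inj_on w inv_into_f_f)
    finally have sU: "(\<Sum>v\<in>B. vsmul (U v) v) = 0" using gc by simp
    show "c = 0"
    proof
      fix i
      show "c i = 0 i"
      proof (cases "i < m")
        case True
        have "U (w i) = 0" using B(2) fB sU True
          unfolding VS.dependent_finite[OF fB] using bij_betw_apply[OF w] by fastforce
        then show ?thesis unfolding U_def using True
          by (metis bij_betw_imp_inj_on inv_into_f_f lessThan_iff w zero_fun_apply)
      next
        case False then show ?thesis using c unfolding Cm_def by simp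
      qed
    qed
  qed
  have gsurj: "z \<in> W \<Longrightarrow> \<exists>c\<in>Cm. g c = z" for z
  proof -
    assume z: "z \<in> W"
    then have "z \<in> VS.span B" using B(3) by blast
    then obtain U where U: "z = (\<Sum>v\<in>B. vsmul (U v) v)" unfolding VS.span_finite[OF fB] by blast
    define c where "c i = (if i < m then U (w i) else 0)" for i
    have "c \<in> Cm" unfolding Cm_def c_def by simp
    moreover have "g c = z" unfolding U g_def lc_def c_def
      using sum.reindex_bij_betw[OF w, of "\<lambda>v. vsmul (U v) v"] by simp
    ultimately show ?thesis by blast
  qed
  define coord where "coord z = (SOME c. c \<in> Cm \<and> g c = z)" for z
  have coord: "z \<in> W \<Longrightarrow> coord z \<in> Cm \<and> g (coord z) = z" for z
  proof -
    assume "z \<in> W"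
    then have "\<exists>c. c \<in> Cm \<and> g c = z" using gsurj by blast
    then show ?thesis unfolding coord_def by (rule someI_ex)
  qed
  define J1 where "J1 = \<lparr> dim = m, cst = (\<lambda>i j k. coord (P (mul J (w i) (w j))) k),
                          gram = (\<lambda>i j. bil J (w i) (w j)) \<rparr>"
  have dJ1: "dim J1 = m" unfolding J1_def by simp
  have cJ1: "carrier J1 = Cm" unfolding carrier_def Cm_def dJ1 by simp
  have gunit: "i < m \<Longrightarrow> g (unitv i) = w i" for i
    unfolding g_def lc_def unitv_def by simp
  have hom: "hom_on J1 J W P g"
  proof (rule hom_from_basis)
    show "bij_betw g (carrier J1) W" unfolding bij_betw_def cJ1
    proof
      show "inj_on g Cm"
      proof (rule inj_onI)
        fix x y assume x: "x \<in> Cm" and y: "y \<in> Cm" and e: "g x = g y"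
        have "x - y \<in> Cm" using x y unfolding Cm_def by simp
        moreover have "g (x - y) = 0" using e gdiff by simp
        ultimately have "x - y = 0" using g0 by blast
        then show "x = y" by simp
      qed
      show "g ` Cm = W" using gW gsurj by blast
    qed
    show "lin_on (carrier J1) g" unfolding lin_on_def using glin_add glin_sm by blast
    show "lin_on (carrier J) P" by (rule P)
    fix i j assume i: "i < dim J1" and j: "j < dim J1"
    have "mul J1 (unitv i) (unitv j) = coord (P (mul J (w i) (w j)))"
    proof -
      have cm: "coord (P (mul J (w i) (w j))) \<in> Cm" using coord PW wW i j dJ1 by simp
      show ?thesis unfolding mul_unitv[OF i j]
        using cm unfolding J1_def Cm_def by (auto simp: fun_eq_iff)
    qed
    then show "g (mul J1 (unitv i) (unitv j)) = P (mul J (g (unitv i)) (g (unitv j)))"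
      using coord PW wW i j dJ1 gunit by simp
    show "bil J (g (unitv i)) (g (unitv j)) = gram J1 i j"
      using gunit i j dJ1 unfolding J1_def by simp
  qed
  have "hom_on J1 J W P g \<and> dim J1 < dim J" using hom dJ1 cB m_def by simp
  then show ?thesis by (intro exI)
qed




lemma hom_in: "hom_on A J W P g \<Longrightarrow> x \<in> carrier A \<Longrightarrow> g x \<in> W"
  by (rule bij_betw_apply[OF hom_onD(1)])

lemma hom_inj: "hom_on A J W P g \<Longrightarrow> x \<in> carrier A \<Longrightarrow> y \<in> carrier A \<Longrightarrow> g x = g y \<Longrightarrow> x = y"
  unfolding hom_on_def bij_betw_def inj_on_def by blast

lemma hom_surj: "hom_on A J W P g \<Longrightarrow> z \<in> W \<Longrightarrow> \<exists>x\<in>carrier A. g x = z"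
  unfolding hom_on_def bij_betw_def by blast

lemma hom_0: "hom_on A J W P g \<Longrightarrow> g 0 = 0"
  using lin_on_0[OF hom_onD(2) subspace_carrier] by blast

lemma hom_mul: "hom_on A J W P g \<Longrightarrow> x \<in> carrier A \<Longrightarrow> y \<in> carrier A \<Longrightarrow> g (mul A x y) = P (mul J (g x) (g y))"
  by (rule hom_onD(3))
lemma hom_bil: "hom_on A J W P g \<Longrightarrow> x \<in> carrier A \<Longrightarrow> y \<in> carrier A \<Longrightarrow> bil A x y = bil J (g x) (g y)"
  by (rule hom_onD(4)[symmetric])

lemma hom_pe_jordan:
  assumes hom: "hom_on A J W P g"
    and comm: "\<And>x y. x \<in> W \<Longrightarrow> y \<in> W \<Longrightarrow> P (mul J x y) = P (mul J y x)"
    and jor: "\<And>x y. x \<in> W \<Longrightarrow> y \<in> W \<Longrightarrow>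
        P (mul J x (P (mul J y (P (mul J x x))))) = P (mul J (P (mul J x y)) (P (mul J x x)))"
    and sym: "\<And>x y. x \<in> W \<Longrightarrow> y \<in> W \<Longrightarrow> bil J x y = bil J y x"
    and nd: "\<And>x. x \<in> W \<Longrightarrow> (\<forall>y\<in>W. bil J x y = 0) \<Longrightarrow> x = 0"
    and inv: "\<And>x y z. x \<in> W \<Longrightarrow> y \<in> W \<Longrightarrow> z \<in> W \<Longrightarrow>
        bil J (P (mul J x y)) z = bil J x (P (mul J y z))"
  shows "pe_jordan A"
proof -
  note gm = hom_mul[OF hom] and gi = hom_in[OF hom] and inj = hom_inj[OF hom]
  have "jordan A" unfolding jordan_def
  proof (intro ballI conjI)
    fix x y assume x: "x \<in> carrier A" and y: "y \<in> carrier A"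
    show "mul A x y = mul A y x"
      by (rule inj) (simp_all add: gm x y comm gi)
    show "mul A x (mul A y (mul A x x)) = mul A (mul A x y) (mul A x x)"
      by (rule inj) (simp_all add: gm x y jor gi)
  qed
  moreover have "\<forall>x\<in>carrier A. \<forall>y\<in>carrier A. bil A x y = bil A y x"
    by (simp add: hom_bil[OF hom] sym gi)
  moreover have "\<forall>x\<in>carrier A. (\<forall>y\<in>carrier A. bil A x y = 0) \<longrightarrow> x = vzero"
  proof (intro ballI impI)
    fix x assume x: "x \<in> carrier A" and h: "\<forall>y\<in>carrier A. bil A x y = 0"
    have "\<forall>z\<in>W. bil J (g x) z = 0"
    proof
      fix z assume "z \<in> W"
      then obtain y where y: "y \<in> carrier A" "g y = z" using hom_surj[OF hom] by blast
      then show "bil J (g x) z = 0" using h x hom_bil[OF hom x y(1)] by simp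
    qed
    then have "g x = g 0" using nd gi x hom_0[OF hom] by simp
    then show "x = vzero" using inj x by simp
  qed
  moreover have "\<forall>x\<in>carrier A. \<forall>y\<in>carrier A. \<forall>z\<in>carrier A. bil A (mul A x y) z = bil A x (mul A y z)"
    by (simp add: hom_bil[OF hom] gm inv gi)
  ultimately show ?thesis unfolding pe_jordan_def by blast
qed

lemma prodk_carrier: "prodk A k x \<Longrightarrow> x \<in> carrier A"
  by (induct rule: prodk.induct) auto

lemma hom_nilpotent:
  assumes hom: "hom_on A J W P g" and nil: "nilpotent_alg J" and WJ: "W \<subseteq> carrier J"
    and E0: "0 \<in> E" and Eadd: "\<And>e e'. e \<in> E \<Longrightarrow> e' \<in> E \<Longrightarrow> e + e' \<in> E"
    and EJ: "E \<subseteq> carrier J"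
    and Eann: "\<And>e y. e \<in> E \<Longrightarrow> y \<in> carrier J \<Longrightarrow> mul J e y = 0 \<and> mul J y e = 0"
    and PE: "\<And>x y. x \<in> carrier J \<Longrightarrow> y \<in> carrier J \<Longrightarrow> P (mul J x y) - mul J x y \<in> E"
    and WE: "\<And>e. e \<in> E \<Longrightarrow> e \<in> W \<Longrightarrow> e = 0"
  shows "nilpotent_alg A"
proof -
  have claim: "\<exists>z e. prodk J k z \<and> e \<in> E \<and> g c = z + e" if "prodk A k c" for k c
    using that
  proof (induct rule: prodk.induct)
    case (base x)
    then have "g x \<in> carrier J" using hom_in[OF hom] WJ by blast
    then have "prodk J 1 (g x)" by (rule prodk.base)
    then have "prodk J 1 (g x) \<and> 0 \<in> E \<and> g x = g x + 0" using E0 by simp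
    then show ?case by blast
  next
    case (step i x j y)
    obtain z e where ze: "prodk J i z" "e \<in> E" "g x = z + e" using step by blast
    obtain z' e' where ze': "prodk J j z'" "e' \<in> E" "g y = z' + e'" using step by blast
    have xc: "x \<in> carrier A" "y \<in> carrier A" using step prodk_carrier by blast+
    have zc: "z \<in> carrier J" "z' \<in> carrier J" using ze ze' prodk_carrier by blast+
    have ec: "e \<in> carrier J" "e' \<in> carrier J" using ze ze' EJ by blast+
    have gc: "g x \<in> carrier J" "g y \<in> carrier J" using xc hom_in[OF hom] WJ by blast+
    define e'' where "e'' = P (mul J (g x) (g y)) - mul J (g x) (g y)"
    have e''E: "e'' \<in> E" unfolding e''_def using PE gc by blast
    have "mul J (g x) (g y) = mul J z z' + mul J z e' + (mul J e z' + mul J e e')"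
      unfolding ze(3) ze'(3) by (simp add: mul_add_left mul_add_right)
    also have "\<dots> = mul J z z'" using Eann ze(2) ze'(2) zc ec by simp
    finally have "g (mul A x y) = mul J z z' + e''"
      unfolding e''_def hom_mul[OF hom xc] by simp
    moreover have "prodk J (i + j) (mul J z z')" using ze(1) ze'(1) by (rule prodk.step)
    ultimately show ?case using e''E by blast
  qed
  obtain m where m: "m \<ge> 1" "\<forall>x. prodk J m x \<longrightarrow> x = vzero" using nil unfolding nilpotent_alg_def by blast
  have "\<forall>x. prodk A m x \<longrightarrow> x = vzero"
  proof (intro allI impI)
    fix c assume c: "prodk A m c"
    obtain z e where ze: "prodk J m z" "e \<in> E" "g c = z + e" using claim[OF c] by blast
    have "z = 0" using m ze by simp
    then have "g c = e" using ze by simp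
    moreover have "g c \<in> W" using hom_in[OF hom] prodk_carrier[OF c] .
    ultimately have "g c = g 0" using WE ze(2) hom_0[OF hom] by simp
    then show "c = vzero" using hom_inj[OF hom] prodk_carrier[OF c] by simp
  qed
  then show ?thesis unfolding nilpotent_alg_def using m(1) by blast
qed

lemma ann_exists:
  assumes nil: "nilpotent_alg J" and d: "dim J \<ge> 1"
  shows "\<exists>z\<in>carrier J. z \<noteq> 0 \<and> (\<forall>y\<in>carrier J. mul J z y = 0)"
proof -
  obtain m where m: "m \<ge> 1" "\<forall>x. prodk J m x \<longrightarrow> x = vzero" using nil unfolding nilpotent_alg_def by blast
  have u0: "prodk J 1 (unitv 0)" using d by (intro prodk.base) simp
  have u0n: "(unitv 0 :: nat \<Rightarrow> 'a) \<noteq> 0" by (auto simp: unitv_def fun_eq_iff)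
  define S where "S = {k. 1 \<le> k \<and> k < m \<and> (\<exists>x. prodk J k x \<and> x \<noteq> 0)}"
  have m2: "m \<noteq> 1" using m u0 u0n by force
  then have "1 \<in> S" unfolding S_def using m(1) u0 u0n by auto
  moreover have fS: "finite S" unfolding S_def by simp
  ultimately have kS: "Max S \<in> S" using Max_in by blast
  define k where "k = Max S"
  obtain x where x: "prodk J k x" "x \<noteq> 0" "k < m" using kS unfolding k_def S_def by blast
  have "\<forall>y\<in>carrier J. mul J x y = 0"
  proof
    fix y assume y: "y \<in> carrier J"
    have p: "prodk J (k + 1) (mul J x y)" using x(1) prodk.base[OF y] by (rule prodk.step)
    show "mul J x y = 0"
    proof (cases "k + 1 < m")
      case True
      have "k + 1 \<notin> S" using Max_ge[OF fS] unfolding k_def by fastforce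
      then show ?thesis using True p unfolding S_def by auto
    next
      case False
      then have "k + 1 = m" using x(3) by simp
      then show ?thesis using p m(2) by simp
    qed
  qed
  then show ?thesis using x prodk_carrier by blast
qed




lemma pe_comm: "pe_jordan J \<Longrightarrow> x \<in> carrier J \<Longrightarrow> y \<in> carrier J \<Longrightarrow> mul J x y = mul J y x"
  unfolding pe_jordan_def jordan_def by blast
lemma pe_jor: "pe_jordan J \<Longrightarrow> x \<in> carrier J \<Longrightarrow> y \<in> carrier J \<Longrightarrow>
    mul J x (mul J y (mul J x x)) = mul J (mul J x y) (mul J x x)"
  unfolding pe_jordan_def jordan_def by blast
lemma pe_sym: "pe_jordan J \<Longrightarrow> x \<in> carrier J \<Longrightarrow> y \<in> carrier J \<Longrightarrow> bil J x y = bil J y x"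
  unfolding pe_jordan_def by blast
lemma pe_nd: "pe_jordan J \<Longrightarrow> x \<in> carrier J \<Longrightarrow> (\<And>y. y \<in> carrier J \<Longrightarrow> bil J x y = 0) \<Longrightarrow> x = 0"
  unfolding pe_jordan_def by auto
lemma pe_inv: "pe_jordan J \<Longrightarrow> x \<in> carrier J \<Longrightarrow> y \<in> carrier J \<Longrightarrow> z \<in> carrier J \<Longrightarrow>
    bil J (mul J x y) z = bil J x (mul J y z)"
  unfolding pe_jordan_def by blast

lemma lin_inj:
  assumes "lin_on S f" "VS.subspace S" "\<And>d. d \<in> S \<Longrightarrow> f d = 0 \<Longrightarrow> d = 0"
  shows "inj_on f S"
proof (rule inj_onI)
  fix x y assume x: "x \<in> S" and y: "y \<in> S" and e: "f x = f y"
  have "x - y \<in> S" using x y assms(2) VS.subspace_diff by blast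
  moreover have "f (x - y) = 0" using lin_on_diff[OF assms(1,2) x y] e by simp
  ultimately have "x - y = 0" using assms(3) by blast
  then show "x = y" by simp
qed

lemma lin_on_id: "lin_on S id" unfolding lin_on_def by simp

lemma caseA:
  fixes J :: "'k::field_char_0 alg"
  assumes pe: "pe_jordan J" and nil: "nilpotent_alg J"
    and u: "u \<in> carrier J" "\<forall>y\<in>carrier J. mul J u y = 0" "bil J u u \<noteq> 0"
    and IH: "\<And>J1::'k alg. dim J1 < dim J \<Longrightarrow> pe_jordan J1 \<Longrightarrow> nilpotent_alg J1 \<Longrightarrow> \<exists>A\<in>gen_class. alg_iso A J1"
  shows "\<exists>A\<in>gen_class. alg_iso A J"
proof -
  define \<beta> where "\<beta> = bil J u u"
  have \<beta>: "\<beta> \<noteq> 0" using u \<beta>_def by simp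
  define W where "W = {x\<in>carrier J. bil J x u = 0}"
  have WJ: "W \<subseteq> carrier J" unfolding W_def by blast
  have subW: "VS.subspace W" unfolding VS.subspace_def W_def
    by (auto simp: bil_add_left bil_smul_left)
  have uann: "y \<in> carrier J \<Longrightarrow> mul J y u = 0" "y \<in> carrier J \<Longrightarrow> mul J u y = 0" for y
    using u pe_comm[OF pe] by metis+
  have PW: "mul J x y \<in> W" if "x \<in> W" "y \<in> W" for x y
  proof -
    have "bil J (mul J x y) u = bil J x (mul J y u)" using pe_inv[OF pe] that WJ u by blast
    then show ?thesis unfolding W_def using uann that WJ by auto
  qed
  have uW: "u \<notin> W" using u unfolding W_def by simp
  have decomp: "z - vsmul (bil J z u / \<beta>) u \<in> W" if "z \<in> carrier J" for z
    using that u \<beta> unfolding W_def \<beta>_def by (auto simp: bil_diff_left bil_smul_left)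
  obtain J1 g where hom1: "hom_on J1 J W id g" and dJ1: "dim J1 < dim J"
    using construct[OF subW WJ lin_on_id _ u(1) uW] PW by auto
  have pe1: "pe_jordan J1"
  proof (rule hom_pe_jordan[OF hom1])
    fix x y z assume x: "x \<in> W" and y: "y \<in> W" and z: "z \<in> W"
    show "id (mul J x y) = id (mul J y x)" using pe_comm[OF pe] x y WJ by auto
    show "id (mul J x (id (mul J y (id (mul J x x))))) = id (mul J (id (mul J x y)) (id (mul J x x)))"
      using pe_jor[OF pe] x y WJ by auto
    show "bil J x y = bil J y x" using pe_sym[OF pe] x y WJ by auto
    show "bil J (id (mul J x y)) z = bil J x (id (mul J y z))" using pe_inv[OF pe] x y z WJ by auto
  next
    fix x assume x: "x \<in> W" and h: "\<forall>y\<in>W. bil J x y = 0"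
    show "x = 0"
    proof (rule pe_nd[OF pe])
      show "x \<in> carrier J" using x WJ by blast
      fix z assume z: "z \<in> carrier J"
      have "bil J x z = bil J x (z - vsmul (bil J z u / \<beta>) u) + (bil J z u / \<beta>) * bil J x u"
        by (simp add: bil_diff_right bil_smul_right)
      also have "\<dots> = 0" using h decomp[OF z] x unfolding W_def by simp
      finally show "bil J x z = 0" .
    qed
  qed
  have nil1: "nilpotent_alg J1"
    by (rule hom_nilpotent[OF hom1 nil WJ, of "{0}"]) auto
  obtain A1 where A1: "A1 \<in> gen_class" "alg_iso A1 J1" using IH[OF dJ1 pe1 nil1] by blast
  obtain f where f: "hom_on A1 J1 (carrier J1) id f" using A1(2) unfolding alg_iso_hom by blast
  define h where "h = g \<circ> f"
  have hom: "hom_on A1 J W id h" unfolding h_def by (rule hom_comp[OF f hom1])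
  define m where "m = dim A1"
  define E1 :: "'k alg" where "E1 = \<lparr> dim = 1, cst = (\<lambda>i j k. 0), gram = (\<lambda>i j. \<beta>) \<rparr>"
  have E1: "E1 \<in> E_class" unfolding E_class_def E1_def using \<beta> by simp
  define T where "T = osum A1 E1"
  have TG: "T \<in> gen_class" unfolding T_def by (rule gen_class.osum[OF A1(1) gen_class.base[OF E1]])
  have dT: "dim T = m + 1" unfolding T_def osum_def m_def E1_def Let_def by simp
  define rs :: "(nat \<Rightarrow> 'k) \<Rightarrow> (nat \<Rightarrow> 'k)" where "rs c = (\<lambda>l. if l < m then c l else 0)" for c
  have rsA: "rs c \<in> carrier A1" for c unfolding rs_def carrier_def m_def by simp
  define \<Phi> where "\<Phi> c = h (rs c) + vsmul (c m) u" for c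
  have hW: "x \<in> carrier A1 \<Longrightarrow> h x \<in> W" for x using hom_in[OF hom] .
  have hJ: "x \<in> carrier A1 \<Longrightarrow> h x \<in> carrier J" for x using hW WJ by blast
  have hlin: "lin_on (carrier A1) h" using hom_onD(2)[OF hom] .
  have rs_add: "rs (x + y) = rs x + rs y" for x y unfolding rs_def by (auto simp: fun_eq_iff)
  have rs_sm: "rs (vsmul a x) = vsmul a (rs x)" for a x unfolding rs_def by (auto simp: fun_eq_iff)
  have Plin: "lin_on (carrier T) \<Phi>" unfolding lin_on_def
  proof (intro conjI ballI allI)
    fix x y assume "x \<in> carrier T" "y \<in> carrier T"
    show "\<Phi> (x + y) = \<Phi> x + \<Phi> y" unfolding \<Phi>_def rs_add lin_on_add[OF hlin rsA rsA]
      by (simp add: vsmul_add_left algebra_simps)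
  next
    fix a x assume "x \<in> carrier T"
    show "\<Phi> (vsmul a x) = vsmul a (\<Phi> x)" unfolding \<Phi>_def rs_sm lin_on_smul[OF hlin rsA]
      by (simp add: vsmul_add)
  qed
  have PhiJ: "\<Phi> c \<in> carrier J" for c unfolding \<Phi>_def using hJ[OF rsA] u(1) by simp
  have rs_unit: "i < m \<Longrightarrow> rs (unitv i) = unitv i" "rs (unitv m) = 0" for i
    unfolding rs_def unitv_def by (auto simp: fun_eq_iff)
  have Phi_unit: "i < m \<Longrightarrow> \<Phi> (unitv i) = h (unitv i)" "\<Phi> (unitv m) = u" for i
    unfolding \<Phi>_def using rs_unit hom_0[OF hom] by (auto simp: unitv_def)
  have bij: "bij_betw \<Phi> (carrier T) (carrier J)" unfolding bij_betw_def
  proof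
    show "inj_on \<Phi> (carrier T)"
    proof (rule lin_inj[OF Plin subspace_carrier])
      fix d assume d: "d \<in> carrier T" and e: "\<Phi> d = 0"
      have "bil J (\<Phi> d) u = d m * \<beta>"
        unfolding \<Phi>_def using hW[OF rsA] unfolding W_def \<beta>_def by (simp add: bil_add_left bil_smul_left)
      then have dm: "d m = 0" using e \<beta> by simp
      then have "h (rs d) = h 0" using e hom_0[OF hom] unfolding \<Phi>_def by simp
      then have "rs d = 0" using hom_inj[OF hom rsA] by simp
      then show "d = 0" using d dm dT unfolding rs_def carrier_def
        by (auto simp: fun_eq_iff) (metis less_Suc_eq not_less)
    qed
    show "\<Phi> ` carrier T = carrier J"
    proof
      show "\<Phi> ` carrier T \<subseteq> carrier J" using PhiJ by blast
      show "carrier J \<subseteq> \<Phi> ` carrier T"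
      proof
        fix z assume z: "z \<in> carrier J"
        define t where "t = bil J z u / \<beta>"
        obtain y where y: "y \<in> carrier A1" "h y = z - vsmul t u"
          using hom_surj[OF hom decomp[OF z]] unfolding t_def by blast
        define c where "c k = (if k < m then y k else if k = m then t else 0)" for k
        have cT: "c \<in> carrier T" unfolding carrier_def c_def dT by simp
        have "rs c = y" using y(1) unfolding rs_def c_def carrier_def m_def by (auto simp: fun_eq_iff)
        then have "\<Phi> c = z" unfolding \<Phi>_def using y(2) by (simp add: c_def)
        then show "z \<in> \<Phi> ` carrier T" using cT by blast
      qed
    qed
  qed
  have cstT: "cst T i j k = (if i < m \<and> j < m \<and> k < m then cst A1 i j k else 0)" for i j k
    unfolding T_def osum_def E1_def m_def Let_def by simp
  have gramT: "gram T i j = (if i < m \<and> j < m then gram A1 i j else if i = m \<and> j = m then \<beta> else 0)"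
    if "i < m + 1" "j < m + 1" for i j
    using that unfolding T_def osum_def E1_def m_def Let_def by auto
  have hom2: "hom_on T J (carrier J) id \<Phi>"
  proof (rule hom_from_basis[OF bij Plin lin_on_id])
    fix i j assume i: "i < dim T" and j: "j < dim T"
    show "\<Phi> (mul T (unitv i) (unitv j)) = id (mul J (\<Phi> (unitv i)) (\<Phi> (unitv j)))"
    proof (cases "i < m \<and> j < m")
      case True
      have iA: "i < dim A1" "j < dim A1" using True m_def by auto
      have "mul T (unitv i) (unitv j) = mul A1 (unitv i) (unitv j)"
        unfolding mul_unitv[OF i j] mul_unitv[OF iA] using True dT cstT m_def by (auto simp: fun_eq_iff)
      moreover have "rs (mul A1 (unitv i) (unitv j)) = mul A1 (unitv i) (unitv j)"
        unfolding rs_def mul_def m_def by (auto simp: fun_eq_iff)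
      moreover have "mul A1 (unitv i) (unitv j) m = 0" unfolding mul_def m_def by simp
      ultimately have "\<Phi> (mul T (unitv i) (unitv j)) = h (mul A1 (unitv i) (unitv j))"
        unfolding \<Phi>_def m_def by simp
      then show ?thesis using True Phi_unit hom_mul[OF hom] m_def by simp
    next
      case False
      then have ij: "i = m \<or> j = m" using i j dT by auto
      have "mul T (unitv i) (unitv j) = 0"
        unfolding mul_unitv[OF i j] using False cstT by (auto simp: fun_eq_iff)
      moreover have "\<Phi> 0 = 0"
      proof -
        have "rs 0 = 0" unfolding rs_def by (simp add: fun_eq_iff)
        then show ?thesis unfolding \<Phi>_def using hom_0[OF hom] by simp
      qed
      moreover have "mul J (\<Phi> (unitv i)) (\<Phi> (unitv j)) = 0"
        using ij Phi_unit uann PhiJ by auto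
      ultimately show ?thesis by simp
    qed
    show "bil J (\<Phi> (unitv i)) (\<Phi> (unitv j)) = gram T i j"
    proof -
      have ij: "i < m + 1" "j < m + 1" using i j dT by auto
      show ?thesis
      proof (cases "i < m")
        case True note ti = this
        show ?thesis
        proof (cases "j < m")
          case True
          have "bil A1 (unitv i) (unitv j) = gram A1 i j" using ti True m_def by (simp add: bil_unitv)
          then show ?thesis using ti True gramT[OF ij] Phi_unit hom_bil[OF hom, of "unitv i" "unitv j"] m_def by simp
        next
          case False
          then have "j = m" using ij by simp
          then show ?thesis using ti gramT[OF ij] Phi_unit hW[of "unitv i"] m_def unfolding W_def by simp
        qed
      next
        case False
        then have im: "i = m" using ij by simp
        show ?thesis
        proof (cases "j < m")
          case True
          have "bil J u (h (unitv j)) = bil J (h (unitv j)) u"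
            using pe_sym[OF pe] u(1) hJ[of "unitv j"] True m_def by simp
          then show ?thesis using im True gramT[OF ij] Phi_unit hW[of "unitv j"] m_def unfolding W_def by simp
        next
          case False
          then have "j = m" using ij by simp
          then show ?thesis using im gramT[OF ij] Phi_unit \<beta>_def by simp
        qed
      qed
    qed
  qed
  have "alg_iso T J" unfolding alg_iso_hom using hom2 by blast
  then show ?thesis using TG by blast
qed




lemma cubic_zero:
  fixes c3 c2 c1 c0 :: "nat \<Rightarrow> 'k::field_char_0"
  assumes "\<And>t. vsmul (t*t*t) c3 + vsmul (t*t) c2 + vsmul t c1 + c0 = 0"
  shows "c3 = 0 \<and> c2 = 0 \<and> c1 = 0 \<and> c0 = 0"
proof -
  have p: "t*t*t * c3 k + t*t * c2 k + t * c1 k + c0 k = 0" for t k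
    using fun_cong[OF assms[of t], of k] by simp
  have "c3 k = 0 \<and> c2 k = 0 \<and> c1 k = 0 \<and> c0 k = 0" for k
  proof -
    have e0: "c0 k = 0" using p[of 0 k] by simp
    have e1: "c3 k + c2 k + c1 k = 0" using p[of 1 k] e0 by simp
    have e2: "- c3 k + c2 k - c1 k = 0" using p[of "-1" k] e0 by simp
    have e3: "8 * c3 k + 4 * c2 k + 2 * c1 k = 0" using p[of 2 k] e0 by (simp add: algebra_simps)
    have "2 * c2 k = 0" using e1 e2 by (simp add: algebra_simps)
    then have c2: "c2 k = 0" by simp
    then have c1: "c1 k = - c3 k" using e1 by (simp add: eq_neg_iff_add_eq_0 add.commute)
    have "6 * c3 k = 0" using e3 c2 c1 by (simp add: algebra_simps)
    then have "c3 k = 0" by simp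
    then show ?thesis using c1 c2 e0 by simp
  qed
  then show ?thesis by (auto simp: fun_eq_iff)
qed

locale cB =
  fixes J :: "'k::field_char_0 alg" and a b :: "nat \<Rightarrow> 'k"
  assumes pe: "pe_jordan J" and a: "a \<in> carrier J" and b: "b \<in> carrier J"
    and bann: "\<forall>y\<in>carrier J. mul J b y = 0"
    and bb: "bil J b b = 0" and ab: "bil J a b = 1" and aa: "bil J a a = 0"
begin

definition P :: "(nat \<Rightarrow> 'k) \<Rightarrow> (nat \<Rightarrow> 'k)" where
  "P z = z - vsmul (bil J z b) a - vsmul (bil J z a) b"
definition pm :: "(nat \<Rightarrow> 'k) \<Rightarrow> (nat \<Rightarrow> 'k) \<Rightarrow> (nat \<Rightarrow> 'k)" where
  "pm x y = P (mul J x y)"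
definition W :: "(nat \<Rightarrow> 'k) set" where
  "W = {x\<in>carrier J. bil J x a = 0 \<and> bil J x b = 0}"

lemma ba: "bil J b a = 1" using pe_sym[OF pe a b] ab by simp

lemma P_add: "P (x + y) = P x + P y"
  unfolding P_def by (simp add: bil_add_left vsmul_add_left algebra_simps)
lemma P_smul: "P (vsmul c x) = vsmul c (P x)"
  unfolding P_def by (simp add: bil_smul_left fun_eq_iff algebra_simps)
lemma P_diff: "P (x - y) = P x - P y"
  unfolding P_def by (simp add: bil_diff_left fun_eq_iff algebra_simps)
lemma P_carrier[simp]: "x \<in> carrier J \<Longrightarrow> P x \<in> carrier J"
  unfolding P_def using a b by simp
lemma P_lin: "lin_on S P" unfolding lin_on_def by (simp add: P_add P_smul)

lemma pm_add_left: "pm (x + y) z = pm x z + pm y z" unfolding pm_def by (simp add: mul_add_left P_add)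
lemma pm_add_right: "pm z (x + y) = pm z x + pm z y" unfolding pm_def by (simp add: mul_add_right P_add)
lemma pm_smul_left: "pm (vsmul c x) z = vsmul c (pm x z)" unfolding pm_def by (simp add: mul_smul_left P_smul)
lemma pm_smul_right: "pm z (vsmul c x) = vsmul c (pm z x)" unfolding pm_def by (simp add: mul_smul_right P_smul)
lemma pm_carrier[simp]: "pm x y \<in> carrier J" unfolding pm_def by simp

lemma WJ: "W \<subseteq> carrier J" unfolding W_def by blast
lemma W_sub: "VS.subspace W" unfolding VS.subspace_def W_def
  by (auto simp: bil_add_left bil_smul_left)
lemma aW: "a \<notin> W" unfolding W_def using ab by simp

lemma P_W: "z \<in> carrier J \<Longrightarrow> P z \<in> W"
  unfolding W_def P_def using a b ab aa bb ba
  by (simp add: bil_diff_left bil_smul_left)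
lemma pm_W[simp]: "x \<in> carrier J \<Longrightarrow> y \<in> carrier J \<Longrightarrow> pm x y \<in> W"
  unfolding pm_def by (simp add: P_W)
lemma P_id: "z \<in> W \<Longrightarrow> P z = z"
  unfolding W_def P_def by simp

lemma mulb: "y \<in> carrier J \<Longrightarrow> mul J b y = 0" "y \<in> carrier J \<Longrightarrow> mul J y b = 0"
  using bann pe_comm[OF pe b] by auto

lemma prod_b: "x \<in> carrier J \<Longrightarrow> y \<in> carrier J \<Longrightarrow> bil J (mul J x y) b = 0"
  using pe_inv[OF pe _ _ b, of x y] mulb by simp

lemma decomp_prod: "x \<in> carrier J \<Longrightarrow> y \<in> carrier J \<Longrightarrow>
    mul J x y = P (mul J x y) + vsmul (bil J (mul J x y) a) b"
  unfolding P_def using prod_b by (simp add: fun_eq_iff)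

lemma red_right: "y \<in> carrier J \<Longrightarrow> u \<in> carrier J \<Longrightarrow> v \<in> carrier J \<Longrightarrow>
    mul J y (P (mul J u v)) = mul J y (mul J u v)"
proof -
  assume y: "y \<in> carrier J" and u: "u \<in> carrier J" and v: "v \<in> carrier J"
  have "mul J y (mul J u v) = mul J y (P (mul J u v)) + vsmul (bil J (mul J u v) a) (mul J y b)"
    by (subst decomp_prod[OF u v]) (simp add: mul_add_right mul_smul_right)
  then show ?thesis using mulb y by simp
qed

lemma red_left: "y \<in> carrier J \<Longrightarrow> u \<in> carrier J \<Longrightarrow> v \<in> carrier J \<Longrightarrow>
    mul J (P (mul J u v)) y = mul J (mul J u v) y"
  using red_right pe_comm[OF pe] P_carrier carrier_mul by metis

lemma pm_comm: "x \<in> carrier J \<Longrightarrow> y \<in> carrier J \<Longrightarrow> pm x y = pm y x"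
  unfolding pm_def using pe_comm[OF pe] by metis

lemma jordan_pm: "x \<in> carrier J \<Longrightarrow> y \<in> carrier J \<Longrightarrow>
    pm x (pm y (pm x x)) = pm (pm x y) (pm x x)"
proof -
  assume x: "x \<in> carrier J" and y: "y \<in> carrier J"
  have "pm x (pm y (pm x x)) = P (mul J x (mul J y (mul J x x)))"
    unfolding pm_def using x y by (simp add: red_right)
  also have "\<dots> = P (mul J (mul J x y) (mul J x x))" using pe_jor[OF pe x y] by simp
  also have "\<dots> = pm (pm x y) (pm x x)"
    unfolding pm_def using x y by (simp add: red_right red_left)
  finally show ?thesis .
qed

lemma bil_P_W: "z \<in> carrier J \<Longrightarrow> w \<in> W \<Longrightarrow> bil J (P z) w = bil J z w"
proof -
  assume z: "z \<in> carrier J" and w: "w \<in> W"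
  have "bil J a w = 0" "bil J b w = 0" using w pe_sym[OF pe] a b unfolding W_def by auto
  then show ?thesis unfolding P_def by (simp add: bil_diff_left bil_smul_left)
qed

lemmas pm_lin = pm_add_left pm_add_right pm_smul_left pm_smul_right

lemma expand:
  fixes t :: 'k
  shows "pm (vsmul t a + x) (pm y (pm (vsmul t a + x) (vsmul t a + x))) -
         pm (pm (vsmul t a + x) y) (pm (vsmul t a + x) (vsmul t a + x)) =
    vsmul (t*t*t) (pm a (pm y (pm a a)) - pm (pm a y) (pm a a)) +
    vsmul (t*t) (pm a (pm y (pm a x)) + pm a (pm y (pm x a)) + pm x (pm y (pm a a))
       - pm (pm a y) (pm a x) - pm (pm a y) (pm x a) - pm (pm x y) (pm a a)) +
    vsmul t (pm a (pm y (pm x x)) + pm x (pm y (pm a x)) + pm x (pm y (pm x a))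
       - pm (pm a y) (pm x x) - pm (pm x y) (pm a x) - pm (pm x y) (pm x a)) +
    (pm x (pm y (pm x x)) - pm (pm x y) (pm x x))"
  by (simp add: pm_lin fun_eq_iff algebra_simps)

end




context cB
begin

lemma coeffs:
  assumes x: "x \<in> carrier J" and y: "y \<in> carrier J"
  shows "pm a (pm y (pm a a)) - pm (pm a y) (pm a a) = 0 \<and>
    pm a (pm y (pm a x)) + pm a (pm y (pm x a)) + pm x (pm y (pm a a))
       - pm (pm a y) (pm a x) - pm (pm a y) (pm x a) - pm (pm x y) (pm a a) = 0 \<and>
    pm a (pm y (pm x x)) + pm x (pm y (pm a x)) + pm x (pm y (pm x a))
       - pm (pm a y) (pm x x) - pm (pm x y) (pm a x) - pm (pm x y) (pm x a) = 0 \<and>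
    pm x (pm y (pm x x)) - pm (pm x y) (pm x x) = 0"
proof (rule cubic_zero)
  fix t :: 'k
  have "vsmul t a + x \<in> carrier J" using a x by simp
  from jordan_pm[OF this y] expand[of t x y]
  show "vsmul (t*t*t) (pm a (pm y (pm a a)) - pm (pm a y) (pm a a)) +
    vsmul (t*t) (pm a (pm y (pm a x)) + pm a (pm y (pm x a)) + pm x (pm y (pm a a))
       - pm (pm a y) (pm a x) - pm (pm a y) (pm x a) - pm (pm x y) (pm a a)) +
    vsmul t (pm a (pm y (pm x x)) + pm x (pm y (pm a x)) + pm x (pm y (pm x a))
       - pm (pm a y) (pm x x) - pm (pm x y) (pm a x) - pm (pm x y) (pm x a)) +
    (pm x (pm y (pm x x)) - pm (pm x y) (pm x x)) = 0" by simp
qed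

lemma pmc: "x \<in> carrier J \<Longrightarrow> y \<in> carrier J \<Longrightarrow> pm x y = pm y x" by (rule pm_comm)

lemma A1:
  assumes x: "x \<in> carrier J" and y: "y \<in> carrier J"
  shows "pm a (pm (pm x x) y) = pm (pm x x) (pm a y) + vsmul 2 (pm (pm a x) (pm x y)) - vsmul 2 (pm x (pm (pm a x) y))"
proof -
  have C: "pm a (pm y (pm x x)) + pm x (pm y (pm a x)) + pm x (pm y (pm x a))
       - pm (pm a y) (pm x x) - pm (pm x y) (pm a x) - pm (pm x y) (pm x a) = 0"
    using coeffs[OF x y] by blast
  have r: "pm x a = pm a x" "pm (pm x x) y = pm y (pm x x)" "pm (pm x x) (pm a y) = pm (pm a y) (pm x x)"
    "pm (pm a x) (pm x y) = pm (pm x y) (pm a x)" "pm (pm a x) y = pm y (pm a x)"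
    using pmc x y a by auto
  have "pm a (pm (pm x x) y) - (pm (pm x x) (pm a y) + vsmul 2 (pm (pm a x) (pm x y)) - vsmul 2 (pm x (pm (pm a x) y)))
    = pm a (pm y (pm x x)) + pm x (pm y (pm a x)) + pm x (pm y (pm x a))
       - pm (pm a y) (pm x x) - pm (pm x y) (pm a x) - pm (pm x y) (pm x a)"
    unfolding r by (simp add: fun_eq_iff algebra_simps)
  then show ?thesis using C by simp
qed

lemma A2:
  assumes x: "x \<in> carrier J" and y: "y \<in> carrier J"
  shows "pm (pm a x) (pm a y) - pm a (pm (pm a x) y) =
    vsmul (1/2) (pm (pm (pm a a) y) x - pm (pm a a) (pm y x))"
proof -
  have C: "pm a (pm y (pm a x)) + pm a (pm y (pm x a)) + pm x (pm y (pm a a))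
       - pm (pm a y) (pm a x) - pm (pm a y) (pm x a) - pm (pm x y) (pm a a) = 0"
    using coeffs[OF x y] by blast
  have r: "pm x a = pm a x" "pm (pm a x) (pm a y) = pm (pm a y) (pm a x)" "pm (pm a x) y = pm y (pm a x)"
    "pm (pm (pm a a) y) x = pm x (pm y (pm a a))" "pm (pm a a) (pm y x) = pm (pm x y) (pm a a)"
    using pmc x y a by auto
  have "pm (pm a x) (pm a y) - pm a (pm (pm a x) y) - vsmul (1/2) (pm (pm (pm a a) y) x - pm (pm a a) (pm y x))
    = vsmul (-1/2) (pm a (pm y (pm a x)) + pm a (pm y (pm x a)) + pm x (pm y (pm a a))
       - pm (pm a y) (pm a x) - pm (pm a y) (pm x a) - pm (pm x y) (pm a a))"
    unfolding r by (simp add: fun_eq_iff algebra_simps)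
  then show ?thesis using C by simp
qed

lemma A3:
  assumes x: "x \<in> carrier J"
  shows "pm a (pm (pm a a) x) = pm (pm a a) (pm a x)"
proof -
  have C: "pm a (pm x (pm a a)) - pm (pm a x) (pm a a) = 0" using coeffs[OF x x] by blast
  have r: "pm (pm a a) x = pm x (pm a a)" "pm (pm a a) (pm a x) = pm (pm a x) (pm a a)"
    using pmc x a by auto
  show ?thesis using C unfolding r by simp
qed

lemma A4:
  assumes x: "x \<in> carrier J"
  shows "pm x (pm a (pm x x)) = pm (pm x x) (pm a x)"
proof -
  have C: "pm x (pm a (pm x x)) - pm (pm x a) (pm x x) = 0" using coeffs[OF x a] by blast
  have r: "pm x a = pm a x" "pm (pm x x) (pm a x) = pm (pm a x) (pm x x)"
    using pmc x a by auto
  show ?thesis using C unfolding r by simp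
qed

lemma A5:
  assumes x: "x \<in> carrier J"
  shows "pm a (pm a (pm x x)) = vsmul 2 (pm (pm a x) (pm a x)) - vsmul 2 (pm x (pm a (pm a x))) + pm (pm a a) (pm x x)"
proof -
  have C: "pm a (pm a (pm x x)) + pm x (pm a (pm a x)) + pm x (pm a (pm x a))
       - pm (pm a a) (pm x x) - pm (pm x a) (pm a x) - pm (pm x a) (pm x a) = 0"
    using coeffs[OF x a] by blast
  have r: "pm x a = pm a x" using pmc x a by auto
  have "pm a (pm a (pm x x)) - (vsmul 2 (pm (pm a x) (pm a x)) - vsmul 2 (pm x (pm a (pm a x))) + pm (pm a a) (pm x x))
    = pm a (pm a (pm x x)) + pm x (pm a (pm a x)) + pm x (pm a (pm x a))
       - pm (pm a a) (pm x x) - pm (pm x a) (pm a x) - pm (pm x a) (pm x a)"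
    unfolding r by (simp add: fun_eq_iff algebra_simps)
  then show ?thesis using C by simp
qed

lemma A6:
  assumes x: "x \<in> carrier J"
  shows "pm a (pm a (pm a x)) = vsmul (3/2) (pm (pm a a) (pm a x)) - vsmul (1/2) (pm x (pm a (pm a a)))"
proof -
  have C: "pm a (pm a (pm a x)) + pm a (pm a (pm x a)) + pm x (pm a (pm a a))
       - pm (pm a a) (pm a x) - pm (pm a a) (pm x a) - pm (pm x a) (pm a a) = 0"
    using coeffs[OF x a] by blast
  have r: "pm x a = pm a x" "pm (pm a x) (pm a a) = pm (pm a a) (pm a x)" using pmc x a by auto
  have "pm a (pm a (pm a x)) - (vsmul (3/2) (pm (pm a a) (pm a x)) - vsmul (1/2) (pm x (pm a (pm a a))))
    = vsmul (1/2) (pm a (pm a (pm a x)) + pm a (pm a (pm x a)) + pm x (pm a (pm a a))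
       - pm (pm a a) (pm a x) - pm (pm a a) (pm x a) - pm (pm x a) (pm a a))"
    unfolding r by (simp add: fun_eq_iff algebra_simps)
  then show ?thesis using C by simp
qed

lemma A7: "pm a (pm a (pm a a)) = pm (pm a a) (pm a a)"
  using coeffs[OF a a] by simp

end




context cB
begin

lemma P0[simp]: "P 0 = 0" unfolding P_def by simp
lemma pm0[simp]: "pm z 0 = 0" "pm 0 z = 0" unfolding pm_def by simp_all

lemma pm_sum_right: "pm z (sum f I) = (\<Sum>i\<in>I. pm z (f i))"
  by (rule additive_sum_gen[where h="pm z"]) (simp_all add: pm_add_right)

lemma adm_transport:
  assumes hom: "hom_on A1 J W P h"
  defines "hinv \<equiv> inv_into (carrier A1) h"
  defines "d \<equiv> (\<lambda>i j. hinv (pm a (h (unitv j))) i)"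
  defines "x0 \<equiv> hinv (pm a a)"
  shows "admissible A1 d x0 \<and> bil_symmetric_map A1 d
    \<and> (\<forall>c\<in>carrier A1. h (Dmap A1 d c) = pm a (h c)) \<and> h x0 = pm a a \<and> x0 \<in> carrier A1"
proof -
  have img: "h ` carrier A1 = W" using hom_onD(1)[OF hom] unfolding bij_betw_def by blast
  have hinv: "w \<in> W \<Longrightarrow> hinv w \<in> carrier A1 \<and> h (hinv w) = w" for w
    unfolding hinv_def using img by (metis f_inv_into_f inv_into_into)
  have hW: "u \<in> carrier A1 \<Longrightarrow> h u \<in> W" for u by (rule hom_in[OF hom])
  have hJ[simp]: "u \<in> carrier A1 \<Longrightarrow> h u \<in> carrier J" for u using hW WJ by blast
  have hlin: "lin_on (carrier A1) h" by (rule hom_onD(2)[OF hom])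
  define m where "m = dim A1"
  have Dsum: "Dmap A1 d c = (\<Sum>j<m. vsmul (c j) (hinv (pm a (h (unitv j)))))" if c: "c \<in> carrier A1" for c
  proof
    fix i
    have hc: "hinv (pm a (h (unitv j))) \<in> carrier A1" if "j < m" for j
      using hinv[of "pm a (h (unitv j))"] that a m_def by simp
    show "Dmap A1 d c i = (\<Sum>j<m. vsmul (c j) (hinv (pm a (h (unitv j))))) i"
    proof (cases "i < m")
      case True
      then show ?thesis unfolding Dmap_def d_def m_def sum_fun_apply by (simp add: mult.commute)
    next
      case False
      then have "hinv (pm a (h (unitv j))) i = 0" if "j < m" for j
        using hc[OF that] unfolding carrier_def m_def by simp
      then show ?thesis using False unfolding Dmap_def m_def sum_fun_apply by simp
    qed
  qed
  have DA[simp]: "Dmap A1 d c \<in> carrier A1" for c unfolding Dmap_def carrier_def by simp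
  have hD[simp]: "h (Dmap A1 d c) = pm a (h c)" if c: "c \<in> carrier A1" for c
  proof -
    have hc: "hinv (pm a (h (unitv j))) \<in> carrier A1" "h (hinv (pm a (h (unitv j)))) = pm a (h (unitv j))"
      if "j < m" for j
      using hinv[of "pm a (h (unitv j))"] that a m_def by simp_all
    have "h (Dmap A1 d c) = (\<Sum>j<m. h (vsmul (c j) (hinv (pm a (h (unitv j))))))"
      unfolding Dsum[OF c] by (rule lin_on_sum[OF hlin subspace_carrier]) (simp add: hc)
    also have "\<dots> = (\<Sum>j<m. vsmul (c j) (pm a (h (unitv j))))"
      by (rule sum.cong[OF refl]) (simp add: lin_on_smul[OF hlin] hc)
    also have "\<dots> = pm a (h c)"
      unfolding arg_cong[OF lin_on_expand[OF hlin c], of "pm a"] pm_sum_right pm_smul_right m_def ..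
    finally show ?thesis .
  qed
  have x0A[simp]: "x0 \<in> carrier A1" and hx0[simp]: "h x0 = pm a a"
    unfolding x0_def using hinv[of "pm a a"] a by simp_all
  have hm[simp]: "u \<in> carrier A1 \<Longrightarrow> v \<in> carrier A1 \<Longrightarrow> h (mul A1 u v) = pm (h u) (h v)" for u v
    using hom_mul[OF hom] unfolding pm_def by simp
  have ha[simp]: "u \<in> carrier A1 \<Longrightarrow> v \<in> carrier A1 \<Longrightarrow> h (u + v) = h u + h v" for u v
    by (rule lin_on_add[OF hlin])
  have hs[simp]: "u \<in> carrier A1 \<Longrightarrow> v \<in> carrier A1 \<Longrightarrow> h (u - v) = h u - h v" for u v
    by (rule lin_on_diff[OF hlin subspace_carrier])
  have hsm[simp]: "u \<in> carrier A1 \<Longrightarrow> h (vsmul c u) = vsmul c (h u)" for c u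
    by (rule lin_on_smul[OF hlin])
  note inj = hom_inj[OF hom]
  have adm: "admissible A1 d x0"
    unfolding admissible_def Let_def
  proof (intro conjI ballI x0A)
    fix x y assume x: "x \<in> carrier A1" and y: "y \<in> carrier A1"
    show "Dmap A1 d (mul A1 (mul A1 x x) y) =
      vsub (vadd (mul A1 (mul A1 x x) (Dmap A1 d y)) (vsmul 2 (mul A1 (Dmap A1 d x) (mul A1 x y))))
        (vsmul 2 (mul A1 x (mul A1 (Dmap A1 d x) y)))"
      by (rule inj) (simp_all add: x y A1)
    show "vsub (mul A1 (Dmap A1 d x) (Dmap A1 d y)) (Dmap A1 d (mul A1 (Dmap A1 d x) y)) =
      vsmul (1 / 2) (assoc A1 x0 y x)"
      unfolding assoc_def by (rule inj) (simp_all add: x y A2)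
    show "Dmap A1 d (mul A1 x0 x) = mul A1 x0 (Dmap A1 d x)"
      by (rule inj) (simp_all add: x A3)
    show "mul A1 x (Dmap A1 d (mul A1 x x)) = mul A1 (mul A1 x x) (Dmap A1 d x)"
      by (rule inj) (simp_all add: x A4)
    show "Dmap A1 d (Dmap A1 d (mul A1 x x)) =
      vadd (vsub (vsmul 2 (mul A1 (Dmap A1 d x) (Dmap A1 d x))) (vsmul 2 (mul A1 x (Dmap A1 d (Dmap A1 d x)))))
        (mul A1 x0 (mul A1 x x))"
      by (rule inj) (simp_all add: x A5)
    show "Dmap A1 d (Dmap A1 d (Dmap A1 d x)) =
      vsub (vsmul (3 / 2) (mul A1 x0 (Dmap A1 d x))) (vsmul (1 / 2) (mul A1 x (Dmap A1 d x0)))"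
      by (rule inj) (simp_all add: x A6)
  next
    show "Dmap A1 d (Dmap A1 d x0) = mul A1 x0 x0"
      by (rule inj) (simp_all add: A7)
  qed
  have bsym: "bil_symmetric_map A1 d"
    unfolding bil_symmetric_map_def
  proof (intro ballI)
    fix x y assume x: "x \<in> carrier A1" and y: "y \<in> carrier A1"
    have "bil A1 (Dmap A1 d x) y = bil J (pm a (h x)) (h y)" using hom_bil[OF hom] x y by simp
    also have "\<dots> = bil J (mul J a (h x)) (h y)" unfolding pm_def using bil_P_W hW y a x by simp
    also have "\<dots> = bil J a (mul J (h x) (h y))" using pe_inv[OF pe] a x y by simp
    finally have l: "bil A1 (Dmap A1 d x) y = bil J a (mul J (h x) (h y))" .
    have "bil A1 x (Dmap A1 d y) = bil J (h x) (pm a (h y))" using hom_bil[OF hom] x y by simp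
    also have "\<dots> = bil J (pm a (h y)) (h x)" using pe_sym[OF pe] x y by simp
    also have "\<dots> = bil J (mul J a (h y)) (h x)" unfolding pm_def using bil_P_W hW y a x by simp
    also have "\<dots> = bil J a (mul J (h y) (h x))" using pe_inv[OF pe] a x y by simp
    also have "\<dots> = bil J a (mul J (h x) (h y))" using pe_comm[OF pe] x y by simp
    finally show "bil A1 (Dmap A1 d x) y = bil A1 x (Dmap A1 d y)" using l by simp
  qed
  show ?thesis using adm bsym hD by simp
qed

end




context cB
begin

lemma caseB_iso:
  assumes hom: "hom_on A1 J W P h"
  defines "hinv \<equiv> inv_into (carrier A1) h"
  defines "d \<equiv> (\<lambda>i j. hinv (pm a (h (unitv j))) i)"
  defines "x0 \<equiv> hinv (pm a a)"
  defines "\<kappa> \<equiv> bil J (mul J a a) a"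
  shows "alg_iso (dext A1 d x0 \<kappa>) J"
proof -
  have tr: "(\<forall>c\<in>carrier A1. h (Dmap A1 d c) = pm a (h c)) \<and> h x0 = pm a a \<and> x0 \<in> carrier A1"
    using adm_transport[OF hom] unfolding d_def x0_def hinv_def by blast
  then have hD: "c \<in> carrier A1 \<Longrightarrow> h (Dmap A1 d c) = pm a (h c)" and hx0: "h x0 = pm a a"
    and x0A: "x0 \<in> carrier A1" for c by auto
  define m where "m = dim A1"
  define T where "T = dext A1 d x0 \<kappa>"
  have dT: "dim T = m + 2" unfolding T_def dext_def Let_def m_def by simp
  have c00: "cst T 0 0 k = (if k = m+1 then \<kappa> else if k = 0 then 0 else x0 (k-1))" if "k < m+2" for k
    using that unfolding T_def dext_def Let_def m_def by simp
  have c0j: "cst T 0 (Suc l) k = (if k = m+1 then bil A1 x0 (unitv l) else if k = 0 then 0 else Dmap A1 d (unitv l) (k-1))"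
    if "k < m+2" "l < m" for k l
    using that unfolding T_def dext_def Let_def m_def by simp
  have ci0: "cst T (Suc l) 0 k = (if k = m+1 then bil A1 x0 (unitv l) else if k = 0 then 0 else Dmap A1 d (unitv l) (k-1))"
    if "k < m+2" "l < m" for k l
    using that unfolding T_def dext_def Let_def m_def by simp
  have cij: "cst T (Suc l) (Suc l') k = (if k = m+1 then bil A1 (Dmap A1 d (unitv l)) (unitv l') else if k = 0 then 0 else cst A1 l l' (k-1))"
    if "k < m+2" "l < m" "l' < m" for k l l'
    using that unfolding T_def dext_def Let_def m_def by simp
  have cb: "cst T i j k = 0" if "i = m+1 \<or> j = m+1" for i j k
    using that unfolding T_def dext_def Let_def m_def by auto
  have gT: "gram T i j = (if (i = 0 \<and> j = m+1) \<or> (i = m+1 \<and> j = 0) then 1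
      else if i = 0 \<or> j = 0 \<or> i = m+1 \<or> j = m+1 then 0 else gram A1 (i-1) (j-1))"
    if "i < m+2" "j < m+2" for i j
    using that unfolding T_def dext_def Let_def m_def by simp
  define sh :: "(nat \<Rightarrow> 'k) \<Rightarrow> (nat \<Rightarrow> 'k)" where "sh c = (\<lambda>l. if l < m then c (Suc l) else 0)" for c
  have shA: "sh c \<in> carrier A1" for c unfolding sh_def carrier_def m_def by simp
  define \<Phi> where "\<Phi> c = vsmul (c 0) a + h (sh c) + vsmul (c (m+1)) b" for c
  have hW: "u \<in> carrier A1 \<Longrightarrow> h u \<in> W" for u by (rule hom_in[OF hom])
  have hJ: "u \<in> carrier A1 \<Longrightarrow> h u \<in> carrier J" for u using hW WJ by blast
  have hlin: "lin_on (carrier A1) h" by (rule hom_onD(2)[OF hom])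
  have sh_add: "sh (x + y) = sh x + sh y" for x y unfolding sh_def by (auto simp: fun_eq_iff)
  have sh_sm: "sh (vsmul c x) = vsmul c (sh x)" for c x unfolding sh_def by (auto simp: fun_eq_iff)
  have sh0: "sh 0 = 0" unfolding sh_def by (auto simp: fun_eq_iff)
  have Plin: "lin_on (carrier T) \<Phi>" unfolding lin_on_def
  proof (intro conjI ballI allI)
    fix x y assume "x \<in> carrier T" "y \<in> carrier T"
    show "\<Phi> (x + y) = \<Phi> x + \<Phi> y" unfolding \<Phi>_def sh_add lin_on_add[OF hlin shA shA]
      by (simp add: vsmul_add_left algebra_simps)
  next
    fix c x assume "x \<in> carrier T"
    show "\<Phi> (vsmul c x) = vsmul c (\<Phi> x)" unfolding \<Phi>_def sh_sm lin_on_smul[OF hlin shA]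
      by (simp add: vsmul_add)
  qed
  have PhiJ: "\<Phi> c \<in> carrier J" for c unfolding \<Phi>_def using hJ[OF shA] a b by simp
  have Phi0: "\<Phi> 0 = 0" unfolding \<Phi>_def sh0 using hom_0[OF hom] by simp
  have Pu0: "\<Phi> (unitv 0) = a"
  proof -
    have "sh (unitv 0) = 0" unfolding sh_def unitv_def by (auto simp: fun_eq_iff)
    then show ?thesis unfolding \<Phi>_def using hom_0[OF hom] by (simp add: unitv_def)
  qed
  have Pum: "\<Phi> (unitv (m+1)) = b"
  proof -
    have "sh (unitv (m+1)) = 0" unfolding sh_def unitv_def by (auto simp: fun_eq_iff)
    then show ?thesis unfolding \<Phi>_def using hom_0[OF hom] by (simp add: unitv_def)
  qed
  have Pul: "\<Phi> (unitv (Suc l)) = h (unitv l)" if "l < m" for l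
  proof -
    have "sh (unitv (Suc l)) = unitv l" using that unfolding sh_def unitv_def by (auto simp: fun_eq_iff)
    then show ?thesis unfolding \<Phi>_def using that by (simp add: unitv_def)
  qed
  have ul: "unitv l \<in> carrier A1" if "l < m" for l using that m_def by simp
  have cases3: "i = 0 \<or> (\<exists>l<m. i = Suc l) \<or> i = m+1" if "i < m+2" for i
    using that by (cases i) auto
  have Phimul: "\<Phi> (mul T (unitv i) (unitv j)) = vsmul (cst T i j 0) a
      + h (\<lambda>l. if l < m then cst T i j (Suc l) else 0) + vsmul (cst T i j (m+1)) b"
    if "i < m+2" "j < m+2" for i j
  proof -
    have e: "mul T (unitv i) (unitv j) = (\<lambda>k. if k < m+2 then cst T i j k else 0)"
      using mul_unitv[of i T j] that dT by simp
    have "sh (mul T (unitv i) (unitv j)) = (\<lambda>l. if l < m then cst T i j (Suc l) else 0)"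
      unfolding e sh_def by (auto simp: fun_eq_iff)
    then show ?thesis unfolding \<Phi>_def e by simp
  qed
  have restr: "(\<lambda>l. if l < m then u l else 0) = u" if "u \<in> carrier A1" for u
    using that unfolding carrier_def m_def by (auto simp: fun_eq_iff)
  have bilPW: "bil J (pm u v) w = bil J (mul J u v) w" if "w \<in> W" "u \<in> carrier J" "v \<in> carrier J" for u v w
    unfolding pm_def using bil_P_W that by simp
  have bilWa: "w \<in> W \<Longrightarrow> bil J w a = 0 \<and> bil J a w = 0 \<and> bil J w b = 0 \<and> bil J b w = 0" for w
    unfolding W_def using pe_sym[OF pe] a b by auto
  have hom2: "hom_on T J (carrier J) id \<Phi>"
  proof (rule hom_from_basis)
    show "lin_on (carrier T) \<Phi>" by (rule Plin)
    show "lin_on (carrier J) id" by (rule lin_on_id)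
    show "bij_betw \<Phi> (carrier T) (carrier J)" unfolding bij_betw_def
    proof
      show "inj_on \<Phi> (carrier T)"
      proof (rule lin_inj[OF Plin subspace_carrier])
        fix c assume c: "c \<in> carrier T" and e: "\<Phi> c = 0"
        have hs: "h (sh c) \<in> W" using hW[OF shA] .
        have "bil J (\<Phi> c) b = c 0" unfolding \<Phi>_def using bilWa[OF hs] ab bb
          by (simp add: bil_add_left bil_smul_left)
        then have c0: "c 0 = 0" using e by simp
        have "bil J (\<Phi> c) a = c (m+1)" unfolding \<Phi>_def using bilWa[OF hs] ba aa
          by (simp add: bil_add_left bil_smul_left)
        then have cm: "c (m+1) = 0" using e by simp
        have "h (sh c) = h 0" using e c0 cm hom_0[OF hom] unfolding \<Phi>_def by simp
        then have s0: "sh c = 0" using hom_inj[OF hom shA] by simp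
        show "c = 0"
        proof
          fix k
          show "c k = 0 k"
          proof (cases k)
            case 0 then show ?thesis using c0 by simp
          next
            case (Suc l)
            show ?thesis
            proof (cases "l < m")
              case True then show ?thesis using fun_cong[OF s0, of l] Suc unfolding sh_def by simp
            next
              case False
              show ?thesis
              proof (cases "l = m")
                case True then show ?thesis using cm Suc by simp
              next
                case False
                then have "k \<ge> dim T" using Suc \<open>\<not> l < m\<close> dT by simp
                then show ?thesis using c unfolding carrier_def by simp
              qed
            qed
          qed
        qed
      qed
      show "\<Phi> ` carrier T = carrier J"
      proof
        show "\<Phi> ` carrier T \<subseteq> carrier J" using PhiJ by blast
        show "carrier J \<subseteq> \<Phi> ` carrier T"
        proof
          fix z assume z: "z \<in> carrier J"
          obtain y where y: "y \<in> carrier A1" "h y = P z" using hom_surj[OF hom P_W[OF z]] by blast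
          define c where "c k = (if k = 0 then bil J z b else if k \<le> m then y (k-1) else if k = m+1 then bil J z a else 0)" for k
          have cT: "c \<in> carrier T" unfolding carrier_def c_def dT by simp
          have shc: "sh c = y" using y(1) unfolding sh_def c_def carrier_def m_def by (auto simp: fun_eq_iff)
          have "\<Phi> c = vsmul (c 0) a + P z + vsmul (c (m+1)) b" unfolding \<Phi>_def shc y(2) ..
          also have "\<dots> = z" unfolding c_def P_def by (simp add: fun_eq_iff)
          finally have "\<Phi> c = z" .
          then show "z \<in> \<Phi> ` carrier T" using cT by blast
        qed
      qed
    qed
  next
    fix i j assume i: "i < dim T" and j: "j < dim T"
    then have i2: "i < m+2" and j2: "j < m+2" using dT by auto
    show "\<Phi> (mul T (unitv i) (unitv j)) = id (mul J (\<Phi> (unitv i)) (\<Phi> (unitv j)))"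
    proof -
      consider "i = m+1 \<or> j = m+1" | "i = 0" "j = 0" | l where "i = 0" "j = Suc l" "l < m"
        | l where "i = Suc l" "j = 0" "l < m" | l l' where "i = Suc l" "j = Suc l'" "l < m" "l' < m"
        using cases3[OF i2] cases3[OF j2] by blast
      then show ?thesis
      proof cases
        case 1
        have "mul T (unitv i) (unitv j) = 0" unfolding mul_unitv[OF i j] using cb 1 by (auto simp: fun_eq_iff)
        moreover have "mul J (\<Phi> (unitv i)) (\<Phi> (unitv j)) = 0" using 1 Pum mulb PhiJ by auto
        ultimately show ?thesis using Phi0 by simp
      next
        case 2
        have sx: "(\<lambda>l. if l < m then cst T 0 0 (Suc l) else 0) = x0"
          using c00 x0A unfolding carrier_def m_def by (auto simp: fun_eq_iff)
        have e: "\<Phi> (mul T (unitv 0) (unitv 0)) = vsmul (cst T 0 0 0) a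
            + h (\<lambda>l. if l < m then cst T 0 0 (Suc l) else 0) + vsmul (cst T 0 0 (m+1)) b"
          using Phimul[OF i2 j2] unfolding 2 .
        have "\<Phi> (mul T (unitv i) (unitv j)) = pm a a + vsmul \<kappa> b"
          unfolding 2 e sx hx0 using c00 by simp
        also have "\<dots> = mul J a a" using decomp_prod[OF a a] unfolding pm_def \<kappa>_def by simp
        finally show ?thesis using 2 Pu0 by simp
      next
        case (3 l)
        have DA: "Dmap A1 d (unitv l) \<in> carrier A1" unfolding Dmap_def carrier_def by simp
        have sx: "(\<lambda>k. if k < m then cst T 0 (Suc l) (Suc k) else 0) = Dmap A1 d (unitv l)"
          using c0j 3 unfolding Dmap_def m_def by (auto simp: fun_eq_iff)
        have "bil A1 x0 (unitv l) = bil J (pm a a) (h (unitv l))"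
          using hom_bil[OF hom x0A ul[OF 3(3)]] hx0 by simp
        also have "\<dots> = bil J (mul J a (h (unitv l))) a"
          using bilPW[OF hW[OF ul[OF 3(3)]] a a] pe_inv[OF pe a a hJ[OF ul[OF 3(3)]]]
            pe_sym[OF pe a] hJ[OF ul[OF 3(3)]] by simp
        finally have bx: "bil A1 x0 (unitv l) = bil J (mul J a (h (unitv l))) a" .
        have e: "\<Phi> (mul T (unitv 0) (unitv (Suc l))) = vsmul (cst T 0 (Suc l) 0) a
            + h (\<lambda>k. if k < m then cst T 0 (Suc l) (Suc k) else 0) + vsmul (cst T 0 (Suc l) (m+1)) b"
          using Phimul[OF i2 j2] unfolding 3(1,2) .
        have "\<Phi> (mul T (unitv i) (unitv j)) = pm a (h (unitv l)) + vsmul (bil J (mul J a (h (unitv l))) a) b"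
          unfolding 3(1,2) e sx hD[OF ul[OF 3(3)]] using c0j 3 bx by simp
        also have "\<dots> = mul J a (h (unitv l))" using decomp_prod[OF a hJ[OF ul[OF 3(3)]]] unfolding pm_def by simp
        finally show ?thesis using 3 Pu0 Pul by simp
      next
        case (4 l)
        have DA: "Dmap A1 d (unitv l) \<in> carrier A1" unfolding Dmap_def carrier_def by simp
        have sx: "(\<lambda>k. if k < m then cst T (Suc l) 0 (Suc k) else 0) = Dmap A1 d (unitv l)"
          using ci0 4 unfolding Dmap_def m_def by (auto simp: fun_eq_iff)
        have "bil A1 x0 (unitv l) = bil J (pm a a) (h (unitv l))"
          using hom_bil[OF hom x0A ul[OF 4(3)]] hx0 by simp
        also have "\<dots> = bil J (mul J a (h (unitv l))) a"
          using bilPW[OF hW[OF ul[OF 4(3)]] a a] pe_inv[OF pe a a hJ[OF ul[OF 4(3)]]]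
            pe_sym[OF pe a] hJ[OF ul[OF 4(3)]] by simp
        finally have bx: "bil A1 x0 (unitv l) = bil J (mul J a (h (unitv l))) a" .
        have e: "\<Phi> (mul T (unitv (Suc l)) (unitv 0)) = vsmul (cst T (Suc l) 0 0) a
            + h (\<lambda>k. if k < m then cst T (Suc l) 0 (Suc k) else 0) + vsmul (cst T (Suc l) 0 (m+1)) b"
          using Phimul[OF i2 j2] unfolding 4(1,2) .
        have "\<Phi> (mul T (unitv i) (unitv j)) = pm a (h (unitv l)) + vsmul (bil J (mul J a (h (unitv l))) a) b"
          unfolding 4(1,2) e sx hD[OF ul[OF 4(3)]] using ci0 4 bx by simp
        also have "\<dots> = mul J a (h (unitv l))" using decomp_prod[OF a hJ[OF ul[OF 4(3)]]] unfolding pm_def by simp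
        also have "\<dots> = mul J (h (unitv l)) a" using pe_comm[OF pe a hJ[OF ul[OF 4(3)]]] .
        finally show ?thesis using 4 Pu0 Pul by simp
      next
        case (5 l l')
        have ml: "mul A1 (unitv l) (unitv l') = (\<lambda>k. if k < m then cst A1 l l' k else 0)"
          using mul_unitv[of l A1 l'] 5 m_def by simp
        have sx: "(\<lambda>k. if k < m then cst T (Suc l) (Suc l') (Suc k) else 0) = mul A1 (unitv l) (unitv l')"
          unfolding ml using cij 5 by (auto simp: fun_eq_iff)
        define w where "w = h (unitv l)"
        define w' where "w' = h (unitv l')"
        have wJ: "w \<in> carrier J" "w' \<in> carrier J" unfolding w_def w'_def using hJ ul 5 by auto
        have w'W: "w' \<in> W" unfolding w'_def using hW ul 5 by auto
        have "bil A1 (Dmap A1 d (unitv l)) (unitv l') = bil J (pm a w) w'"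
          using hom_bil[OF hom _ ul[OF 5(4)], of "Dmap A1 d (unitv l)"] hD[OF ul[OF 5(3)]]
          unfolding w_def w'_def Dmap_def carrier_def by simp
        also have "\<dots> = bil J (mul J w w') a"
          using bilPW[OF w'W a wJ(1)] pe_inv[OF pe a wJ] pe_sym[OF pe a] wJ by simp
        finally have bx: "bil A1 (Dmap A1 d (unitv l)) (unitv l') = bil J (mul J w w') a" .
        have e: "\<Phi> (mul T (unitv (Suc l)) (unitv (Suc l'))) = vsmul (cst T (Suc l) (Suc l') 0) a
            + h (\<lambda>k. if k < m then cst T (Suc l) (Suc l') (Suc k) else 0) + vsmul (cst T (Suc l) (Suc l') (m+1)) b"
          using Phimul[OF i2 j2] unfolding 5(1,2) .
        have "\<Phi> (mul T (unitv i) (unitv j)) = pm w w' + vsmul (bil J (mul J w w') a) b"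
          unfolding 5(1,2) e sx using cij 5 bx hom_mul[OF hom ul[OF 5(3)] ul[OF 5(4)]]
          unfolding w_def w'_def pm_def by simp
        also have "\<dots> = mul J w w'" using decomp_prod[OF wJ] unfolding pm_def by simp
        finally show ?thesis using 5 Pul unfolding w_def w'_def by simp
      qed
    qed
    show "bil J (\<Phi> (unitv i)) (\<Phi> (unitv j)) = gram T i j"
    proof -
      consider "i = 0" | l where "i = Suc l" "l < m" | "i = m+1" using cases3[OF i2] by blast
      note ci = this
      consider "j = 0" | l where "j = Suc l" "l < m" | "j = m+1" using cases3[OF j2] by blast
      note cj = this
      show ?thesis
      proof (cases rule: ci)
        case 1
        then show ?thesis
        proof (cases rule: cj)
          case 1 then show ?thesis using \<open>i = 0\<close> gT[OF i2 j2] Pu0 aa by simp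
        next
          case (2 l) then show ?thesis using \<open>i = 0\<close> gT[OF i2 j2] Pu0 Pul bilWa hW ul by simp
        next
          case 3 then show ?thesis using \<open>i = 0\<close> gT[OF i2 j2] Pu0 Pum ab by simp
        qed
      next
        case (2 l) note il = this
        then show ?thesis
        proof (cases rule: cj)
          case 1 then show ?thesis using il gT[OF i2 j2] Pu0 Pul bilWa hW ul by simp
        next
          case (2 l')
          have "gram A1 l l' = bil A1 (unitv l) (unitv l')" using bil_unitv[of l A1 l'] il 2 m_def by simp
          then show ?thesis using il 2 gT[OF i2 j2] Pul hom_bil[OF hom ul ul] by simp
        next
          case 3 then show ?thesis using il gT[OF i2 j2] Pum Pul bilWa hW ul by simp
        qed
      next
        case 3 note im = this
        then show ?thesis
        proof (cases rule: cj)
          case 1 then show ?thesis using im gT[OF i2 j2] Pu0 Pum ba by simp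
        next
          case (2 l) then show ?thesis using im gT[OF i2 j2] Pum Pul bilWa hW ul by simp
        next
          case 3 then show ?thesis using im gT[OF i2 j2] Pum bb by simp
        qed
      qed
    qed
  qed
  show ?thesis unfolding alg_iso_hom T_def[symmetric] using hom2 by blast
qed

end




lemma caseB:
  fixes J :: "'k::field_char_0 alg"
  assumes pe: "pe_jordan J" and nil: "nilpotent_alg J"
    and b: "b \<in> carrier J" "b \<noteq> 0" "\<forall>y\<in>carrier J. mul J b y = 0" "bil J b b = 0"
    and IH: "\<And>J1::'k alg. dim J1 < dim J \<Longrightarrow> pe_jordan J1 \<Longrightarrow> nilpotent_alg J1 \<Longrightarrow> \<exists>A\<in>gen_class. alg_iso A J1"
  shows "\<exists>A\<in>gen_class. alg_iso A J"
proof -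
  obtain y where y: "y \<in> carrier J" "bil J b y \<noteq> 0"
  proof -
    have "\<not> (\<forall>y. y \<in> carrier J \<longrightarrow> bil J b y = 0)" using pe_nd[OF pe b(1)] b(2) by blast
    then show ?thesis using that by blast
  qed
  define y' where "y' = vsmul (1 / bil J b y) y"
  have y'c: "y' \<in> carrier J" unfolding y'_def using y by simp
  have y'b: "bil J y' b = 1" unfolding y'_def using y pe_sym[OF pe b(1) y(1)] by (simp add: bil_smul_left)
  have by': "bil J b y' = 1" using y'b pe_sym[OF pe b(1) y'c] by simp
  define a where "a = y' - vsmul (bil J y' y' / 2) b"
  have ac: "a \<in> carrier J" unfolding a_def using y'c b by simp
  have ab: "bil J a b = 1" unfolding a_def using y'b b(4) by (simp add: bil_diff_left bil_smul_left)
  have aa: "bil J a a = 0" unfolding a_def using y'b by' b(4)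
    by (simp add: bil_diff_left bil_diff_right bil_smul_left bil_smul_right)
  interpret cB J a b using pe ac b(1) b(3) b(4) ab aa by unfold_locales
  obtain J1 g where hom1: "hom_on J1 J W P g" and dJ1: "dim J1 < dim J"
    using construct[OF W_sub WJ P_lin _ ac aW] P_W by auto
  have pe1: "pe_jordan J1"
  proof (rule hom_pe_jordan[OF hom1])
    fix x y z assume x: "x \<in> W" and y: "y \<in> W" and z: "z \<in> W"
    have xc: "x \<in> carrier J" and yc: "y \<in> carrier J" and zc: "z \<in> carrier J" using x y z WJ by auto
    show "P (mul J x y) = P (mul J y x)" using pe_comm[OF pe xc yc] by simp
    show "P (mul J x (P (mul J y (P (mul J x x))))) = P (mul J (P (mul J x y)) (P (mul J x x)))"
      using jordan_pm[OF xc yc] unfolding pm_def .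
    show "bil J x y = bil J y x" using pe_sym[OF pe xc yc] .
    have "bil J (P (mul J x y)) z = bil J (mul J x y) z" using bil_P_W[OF _ z] xc yc by simp
    also have "\<dots> = bil J x (mul J y z)" using pe_inv[OF pe xc yc zc] .
    also have "\<dots> = bil J (mul J y z) x" using pe_sym[OF pe xc] by simp
    also have "\<dots> = bil J (P (mul J y z)) x" using bil_P_W[OF _ x] yc zc by simp
    also have "\<dots> = bil J x (P (mul J y z))" using pe_sym[OF pe xc] yc zc by simp
    finally show "bil J (P (mul J x y)) z = bil J x (P (mul J y z))" .
  next
    fix x assume x: "x \<in> W" and h: "\<forall>y\<in>W. bil J x y = 0"
    have xc: "x \<in> carrier J" using x WJ by auto
    have xab: "bil J x a = 0" "bil J x b = 0" using x unfolding W_def by auto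
    show "x = 0"
    proof (rule pe_nd[OF pe xc])
      fix z assume z: "z \<in> carrier J"
      have "z = P z + vsmul (bil J z b) a + vsmul (bil J z a) b" unfolding P_def by (simp add: fun_eq_iff)
      then have "bil J x z = bil J x (P z + vsmul (bil J z b) a + vsmul (bil J z a) b)" by simp
      also have "\<dots> = bil J x (P z)" using xab by (simp add: bil_add_right bil_smul_right)
      also have "\<dots> = 0" using h P_W[OF z] by simp
      finally show "bil J x z = 0" .
    qed
  qed
  have nil1: "nilpotent_alg J1"
  proof (rule hom_nilpotent[OF hom1 nil WJ, of "range (\<lambda>t. vsmul t b)"])
    show "0 \<in> range (\<lambda>t. vsmul t b)" by (rule image_eqI[of _ _ 0]) simp_all
    fix e e' assume "e \<in> range (\<lambda>t. vsmul t b)" "e' \<in> range (\<lambda>t. vsmul t b)"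
    then obtain t t' where "e = vsmul t b" "e' = vsmul t' b" by blast
    then show "e + e' \<in> range (\<lambda>t. vsmul t b)" by (intro image_eqI[of _ _ "t + t'"]) (simp_all add: vsmul_add_left)
  next
    show "range (\<lambda>t. vsmul t b) \<subseteq> carrier J" using b(1) by auto
  next
    fix e y assume "e \<in> range (\<lambda>t. vsmul t b)" "y \<in> carrier J"
    then show "mul J e y = 0 \<and> mul J y e = 0" using mulb by (auto simp: mul_smul_left mul_smul_right)
  next
    fix x y assume x: "x \<in> carrier J" and y: "y \<in> carrier J"
    have "P (mul J x y) - mul J x y = vsmul (- bil J (mul J x y) a) b"
      using decomp_prod[OF x y] by (simp add: fun_eq_iff)
    then show "P (mul J x y) - mul J x y \<in> range (\<lambda>t. vsmul t b)" by (metis rangeI)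
  next
    fix e assume "e \<in> range (\<lambda>t. vsmul t b)" "e \<in> W"
    then obtain t where t: "e = vsmul t b" "bil J (vsmul t b) a = 0" unfolding W_def by blast
    then have "t = 0" using ba by (simp add: bil_smul_left)
    then show "e = 0" using t by simp
  qed
  obtain A1 where A1: "A1 \<in> gen_class" "alg_iso A1 J1" using IH[OF dJ1 pe1 nil1] by blast
  obtain f where f: "hom_on A1 J1 (carrier J1) id f" using A1(2) unfolding alg_iso_hom by blast
  have hom: "hom_on A1 J W P (g \<circ> f)" by (rule hom_comp[OF f hom1])
  define hinv where "hinv = inv_into (carrier A1) (g \<circ> f)"
  define d where "d = (\<lambda>i j. hinv (pm a ((g \<circ> f) (unitv j))) i)"
  define x0 where "x0 = hinv (pm a a)"
  define \<kappa> where "\<kappa> = bil J (mul J a a) a"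
  have adm: "admissible A1 d x0" "bil_symmetric_map A1 d"
    using adm_transport[OF hom] unfolding d_def x0_def hinv_def by auto
  have TG: "dext A1 d x0 \<kappa> \<in> gen_class" by (rule gen_class.dext[OF A1(1) adm])
  have "alg_iso (dext A1 d x0 \<kappa>) J" using caseB_iso[OF hom] unfolding d_def x0_def hinv_def \<kappa>_def .
  then show ?thesis using TG by blast
qed

lemma main_induct:
  fixes J :: "'k::field_char_0 alg"
  shows "pe_jordan J \<Longrightarrow> nilpotent_alg J \<Longrightarrow> \<exists>A\<in>gen_class. alg_iso A J"
proof (induct "dim J" arbitrary: J rule: less_induct)
  case less
  show ?case
  proof (cases "dim J = 0")
    case True
    then have "J \<in> gen_class" by (intro gen_class.base) (simp add: E_class_def)
    then show ?thesis using alg_iso_refl by blast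
  next
    case False
    have IH: "\<And>J1::'k alg. dim J1 < dim J \<Longrightarrow> pe_jordan J1 \<Longrightarrow> nilpotent_alg J1 \<Longrightarrow> \<exists>A\<in>gen_class. alg_iso A J1"
      using less(1) by blast
    obtain z where z: "z \<in> carrier J" "z \<noteq> 0" "\<forall>y\<in>carrier J. mul J z y = 0"
      using ann_exists[OF less(3)] False by auto
    show ?thesis
    proof (cases "\<exists>u\<in>carrier J. (\<forall>y\<in>carrier J. mul J u y = 0) \<and> bil J u u \<noteq> 0")
      case True
      then obtain u where "u \<in> carrier J" "\<forall>y\<in>carrier J. mul J u y = 0" "bil J u u \<noteq> 0" by blast
      then show ?thesis using caseA[OF less(2,3) _ _ _ IH] by blast
    next
      case False
      then have "bil J z z = 0" using z by blast
      then show ?thesis using caseB[OF less(2,3) z _ IH] by blast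
    qed
  qed
qed

theorem mainTheorem7:
  fixes J :: "('k::field_char_0) alg"
  assumes "pe_jordan J"
    and "nilpotent_alg J"
    and "\<not> (\<exists>E\<in>E_class. alg_iso J E)"
  shows "\<exists>A\<in>gen_class. alg_iso J A"
  using main_induct[OF assms(1,2)] alg_iso_sym by blast



end
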